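(* Let $\Theta$ be the set of $f\in R_{\mathrm{hom}}$ such that there exists a line $\ell$ defined over $\mathbb{F}_q$ with $C_f$ singular at every $\mathbb{F}_q$-point of $\ell$. Then \[(q^2 + q + 1)q^{-3(q+1)}(1 - q^{-3q+2}) \leq \mu(\Theta) \leq (q^2+q+1)q^{-3(q+1)}.\]
   Context: Let $q$ be a prime power. For $d\ge1$ let $R_d\subseteq\mathbb{F}_q[x,y,z]$ be the space of homogeneous polynomials of degree $d$ (including $0$), $R_{\mathrm{hom}}=\bigcup_{d\ge1}R_d$, and $\mu(\mathcal{P})=\lim_{d\to\infty}|\mathcal{P}\cap R_d|/|R_d|$. $C_f=\{f=0\}\subseteq\mathbb{P}^2$ ($C_f=\mathbb{P}^2$ if $f=0$, in which case every point is considered singular). "$C_f$ singular at $P$" means $P\in C_f$ and $C_f$ is not smooth at $P$. *)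

theory Defs
  imports Complex_Main
begin

text \<open>Homogeneous polynomials of degree d in x,y,z over a finite field 'a are
represented by their coefficient functions on exponent triples (i,j,k),
supported on the monomials with i+j+k = d.\<close>

type_synonym expo = "nat \<times> nat \<times> nat"

definition monoms :: "nat \<Rightarrow> expo set" where
  "monoms d = {(i,j,k). i + j + k = d}"

definition homog :: "nat \<Rightarrow> (expo \<Rightarrow> 'a::zero) set" where
  "homog d = {c. \<forall>m. m \<notin> monoms d \<longrightarrow> c m = 0}"

definition peval :: "nat \<Rightarrow> (expo \<Rightarrow> 'a::comm_ring_1) \<Rightarrow> 'a \<Rightarrow> 'a \<Rightarrow> 'a \<Rightarrow> 'a" where
  "peval d c x y z = (\<Sum>(i,j,k)\<in>monoms d. c (i,j,k) * x ^ i * y ^ j * z ^ k)"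

definition pdx :: "nat \<Rightarrow> (expo \<Rightarrow> 'a::comm_ring_1) \<Rightarrow> 'a \<Rightarrow> 'a \<Rightarrow> 'a \<Rightarrow> 'a" where
  "pdx d c x y z = (\<Sum>(i,j,k)\<in>monoms d. c (i,j,k) * of_nat i * x ^ (i - 1) * y ^ j * z ^ k)"

definition pdy :: "nat \<Rightarrow> (expo \<Rightarrow> 'a::comm_ring_1) \<Rightarrow> 'a \<Rightarrow> 'a \<Rightarrow> 'a \<Rightarrow> 'a" where
  "pdy d c x y z = (\<Sum>(i,j,k)\<in>monoms d. c (i,j,k) * of_nat j * x ^ i * y ^ (j - 1) * z ^ k)"

definition pdz :: "nat \<Rightarrow> (expo \<Rightarrow> 'a::comm_ring_1) \<Rightarrow> 'a \<Rightarrow> 'a \<Rightarrow> 'a \<Rightarrow> 'a" where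
  "pdz d c x y z = (\<Sum>(i,j,k)\<in>monoms d. c (i,j,k) * of_nat k * x ^ i * y ^ j * z ^ (k - 1))"

text \<open>C_f is singular at the projective point [x:y:z] (Jacobian criterion;
for f = 0 every point is singular).\<close>
definition sing_at :: "nat \<Rightarrow> (expo \<Rightarrow> 'a::comm_ring_1) \<Rightarrow> 'a \<Rightarrow> 'a \<Rightarrow> 'a \<Rightarrow> bool" where
  "sing_at d c x y z \<longleftrightarrow> peval d c x y z = 0 \<and> pdx d c x y z = 0 \<and>
      pdy d c x y z = 0 \<and> pdz d c x y z = 0"

definition Theta :: "nat \<Rightarrow> (expo \<Rightarrow> 'a::{finite,field}) set" where
  "Theta d = {c \<in> homog d. \<exists>a b e. (a, b, e) \<noteq> (0, 0, 0) \<and>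
      (\<forall>x y z. (x, y, z) \<noteq> (0, 0, 0) \<and> a * x + b * y + e * z = 0 \<longrightarrow> sing_at d c x y z)}"

end

theory Submission
  imports Defs "HOL-Computational_Algebra.Polynomial" "HOL-Library.FuncSet"
begin

definition lf :: "nat \<Rightarrow> (expo \<Rightarrow> 'a::comm_ring_1) \<Rightarrow> (expo \<Rightarrow> 'a) \<Rightarrow> 'a" where
  "lf d W c = (\<Sum>m\<in>monoms d. c m * W m)"

lemma finite_monoms: "finite (monoms d)"
proof -
  have "monoms d \<subseteq> {..d} \<times> {..d} \<times> {..d}" unfolding monoms_def by auto
  then show ?thesis by (rule finite_subset) auto
qed

lemma peval_lf: "peval d c x y z = lf d (\<lambda>(i,j,k). x^i*y^j*z^k) c"
  unfolding peval_def lf_def by (rule sum.cong) (auto simp: mult.assoc)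
lemma pdx_lf: "pdx d c x y z = lf d (\<lambda>(i,j,k). of_nat i * x^(i-1)*y^j*z^k) c"
  unfolding pdx_def lf_def by (rule sum.cong) (auto simp: mult.assoc)
lemma pdy_lf: "pdy d c x y z = lf d (\<lambda>(i,j,k). of_nat j * x^i*y^(j-1)*z^k) c"
  unfolding pdy_def lf_def by (rule sum.cong) (auto simp: mult.assoc)
lemma pdz_lf: "pdz d c x y z = lf d (\<lambda>(i,j,k). of_nat k * x^i*y^j*z^(k-1)) c"
  unfolding pdz_def lf_def by (rule sum.cong) (auto simp: mult.assoc)

lemma lf_sum: "lf d W (\<lambda>m. \<Sum>i\<in>I. u i * f i m) = (\<Sum>i\<in>I. u i * lf d W (f i))"
  unfolding lf_def by (simp add: sum_distrib_left sum_distrib_right mult.assoc sum.swap[of _ I])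

lemma lf_add: "lf d W (\<lambda>m. a m + b m) = lf d W a + lf d W b"
  unfolding lf_def by (simp add: distrib_right sum.distrib)
lemma lf_diff: "lf d W (\<lambda>m. a m - b m) = lf d W a - lf d W b"
  unfolding lf_def by (simp add: left_diff_distrib sum_subtractf)
lemma lf_zero: "lf d W (\<lambda>m. 0) = 0"
  unfolding lf_def by simp

lemma scale3: "(t*x)^i*(t*y)^j*(t*z)^k = t^(i+j+k)*(x^i*y^j*z^k)" for t x y z :: "'a::comm_ring_1"
  by (simp add: power_mult_distrib power_add mult_ac)

lemma peval_scale: "peval d c (t*x) (t*y) (t*z) = t^d * peval d c x y z"
  unfolding peval_def sum_distrib_left
proof (rule sum.cong, simp, clarify)
  fix i j k assume "(i,j,k) \<in> monoms d"
  then have d: "d = i+j+k" by (simp add: monoms_def)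
  have "c (i,j,k) * (t*x)^i * (t*y)^j * (t*z)^k = c (i,j,k) * ((t*x)^i*(t*y)^j*(t*z)^k)" by (simp only: mult.assoc)
  also have "\<dots> = t^d * (c (i,j,k) * x^i * y^j * z^k)" unfolding scale3 d by (simp add: mult_ac)
  finally show "c (i,j,k) * (t*x)^i * (t*y)^j * (t*z)^k = t^d * (c (i,j,k) * x^i * y^j * z^k)" .
qed

lemma pow_pred_scale: "of_nat i * (t*x)^(i-1) * (t*y)^j * (t*z)^k
   = t^(i+j+k-1) * (of_nat i * x^(i-1)*y^j*z^k)" for t x y z :: "'a::comm_ring_1"
proof (cases i)
  case 0 then show ?thesis by simp
next
  case (Suc n)
  have "of_nat i * (t*x)^(i-1) * (t*y)^j * (t*z)^k = of_nat i * ((t*x)^n * (t*y)^j * (t*z)^k)"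
    using Suc by (simp only: mult.assoc diff_Suc_1)
  also have "\<dots> = t^(i+j+k-1) * (of_nat i * x^(i-1)*y^j*z^k)" unfolding scale3 using Suc by (simp add: mult_ac)
  finally show ?thesis .
qed

lemma pdx_scale: "pdx d c (t*x) (t*y) (t*z) = t^(d-1) * pdx d c x y z"
  unfolding pdx_def sum_distrib_left
proof (rule sum.cong, simp, clarify)
  fix i j k assume "(i,j,k) \<in> monoms d"
  then have d: "d = i+j+k" by (simp add: monoms_def)
  have "c (i,j,k) * of_nat i * (t*x)^(i-1) * (t*y)^j * (t*z)^k = c (i,j,k) * (of_nat i * (t*x)^(i-1) * (t*y)^j * (t*z)^k)" by (simp only: mult.assoc)
  also have "\<dots> = t^(d-1) * (c (i,j,k) * of_nat i * x^(i-1) * y^j * z^k)" unfolding pow_pred_scale d by (simp add: mult_ac)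
  finally show "c (i,j,k) * of_nat i * (t*x)^(i-1) * (t*y)^j * (t*z)^k = t^(d-1) * (c (i,j,k) * of_nat i * x^(i-1) * y^j * z^k)" .
qed

lemma pdy_scale: "pdy d c (t*x) (t*y) (t*z) = t^(d-1) * pdy d c x y z"
  unfolding pdy_def sum_distrib_left
proof (rule sum.cong, simp, clarify)
  fix i j k assume "(i,j,k) \<in> monoms d"
  then have d: "d = j+i+k" by (simp add: monoms_def)
  have "c (i,j,k) * of_nat j * (t*x)^i * (t*y)^(j-1) * (t*z)^k = c (i,j,k) * (of_nat j * (t*y)^(j-1) * (t*x)^i * (t*z)^k)" by (simp only: mult_ac)
  also have "\<dots> = t^(d-1) * (c (i,j,k) * of_nat j * x^i * y^(j-1) * z^k)" unfolding pow_pred_scale d by (simp add: mult_ac)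
  finally show "c (i,j,k) * of_nat j * (t*x)^i * (t*y)^(j-1) * (t*z)^k = t^(d-1) * (c (i,j,k) * of_nat j * x^i * y^(j-1) * z^k)" .
qed

lemma pdz_scale: "pdz d c (t*x) (t*y) (t*z) = t^(d-1) * pdz d c x y z"
  unfolding pdz_def sum_distrib_left
proof (rule sum.cong, simp, clarify)
  fix i j k assume "(i,j,k) \<in> monoms d"
  then have d: "d = k+i+j" by (simp add: monoms_def)
  have "c (i,j,k) * of_nat k * (t*x)^i * (t*y)^j * (t*z)^(k-1) = c (i,j,k) * (of_nat k * (t*z)^(k-1) * (t*x)^i * (t*y)^j)" by (simp only: mult_ac)
  also have "\<dots> = t^(d-1) * (c (i,j,k) * of_nat k * x^i * y^j * z^(k-1))" unfolding pow_pred_scale d by (simp add: mult_ac)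
  finally show "c (i,j,k) * of_nat k * (t*x)^i * (t*y)^j * (t*z)^(k-1) = t^(d-1) * (c (i,j,k) * of_nat k * x^i * y^j * z^(k-1))" .
qed

lemma sing_scale:
  fixes t :: "'a::field"
  assumes "t \<noteq> 0"
  shows "sing_at d c (t*x) (t*y) (t*z) \<longleftrightarrow> sing_at d c x y z"
  using assms unfolding sing_at_def peval_scale pdx_scale pdy_scale pdz_scale by simp

lemma euler_term: "x * (of_nat i * x^(i-1)) = of_nat i * x^i" for x :: "'a::comm_ring_1"
  by (cases i) auto

lemma euler: "x * pdx d c x y z + y * pdy d c x y z + z * pdz d c x y z = of_nat d * peval d c x y z"
  unfolding pdx_def pdy_def pdz_def peval_def sum_distrib_left sum.distrib[symmetric]
proof (rule sum.cong, simp, clarify)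
  fix i j k assume "(i,j,k) \<in> monoms d"
  then have d: "d = i+j+k" by (simp add: monoms_def)
  have "x * (c (i,j,k) * of_nat i * x^(i-1) * y^j * z^k) = c (i,j,k) * y^j * z^k * (x * (of_nat i * x^(i-1)))"
    by (simp only: mult_ac)
  also have "\<dots> = c (i,j,k) * of_nat i * x^i * y^j * z^k" unfolding euler_term by (simp only: mult_ac)
  finally have 1: "x * (c (i,j,k) * of_nat i * x^(i-1) * y^j * z^k) = c (i,j,k) * of_nat i * x^i * y^j * z^k" .
  have "y * (c (i,j,k) * of_nat j * x^i * y^(j-1) * z^k) = c (i,j,k) * x^i * z^k * (y * (of_nat j * y^(j-1)))"
    by (simp only: mult_ac)
  also have "\<dots> = c (i,j,k) * of_nat j * x^i * y^j * z^k" unfolding euler_term by (simp only: mult_ac)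
  finally have 2: "y * (c (i,j,k) * of_nat j * x^i * y^(j-1) * z^k) = c (i,j,k) * of_nat j * x^i * y^j * z^k" .
  have "z * (c (i,j,k) * of_nat k * x^i * y^j * z^(k-1)) = c (i,j,k) * x^i * y^j * (z * (of_nat k * z^(k-1)))"
    by (simp only: mult_ac)
  also have "\<dots> = c (i,j,k) * of_nat k * x^i * y^j * z^k" unfolding euler_term by (simp only: mult_ac)
  finally have 3: "z * (c (i,j,k) * of_nat k * x^i * y^j * z^(k-1)) = c (i,j,k) * of_nat k * x^i * y^j * z^k" .
  show "x * (c (i,j,k) * of_nat i * x^(i-1) * y^j * z^k) + y * (c (i,j,k) * of_nat j * x^i * y^(j-1) * z^k) +
        z * (c (i,j,k) * of_nat k * x^i * y^j * z^(k-1)) = of_nat d * (c (i,j,k) * x^i * y^j * z^k)"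
    unfolding 1 2 3 d by (simp add: algebra_simps)
qed


definition P1 :: "nat \<Rightarrow> 'a::comm_ring_1 poly \<Rightarrow> 'a poly \<Rightarrow> expo \<Rightarrow> 'a" where
  "P1 d g h = (\<lambda>(i,j,k). if i+j+k = d then coeff g j * coeff h k else 0)"

lemma P1_homog: "P1 d g h \<in> homog d"
  unfolding homog_def P1_def monoms_def by auto

lemma sum_monoms_reindex:
  assumes "dg + dh \<le> d"
    and "\<And>i j k. i+j+k = d \<Longrightarrow> dg < j \<or> dh < k \<Longrightarrow> F (i,j,k) = 0"
  shows "(\<Sum>m\<in>monoms d. F m) = (\<Sum>j\<le>dg. \<Sum>k\<le>dh. F (d-j-k, j, k))"
proof -
  let ?phi = "\<lambda>(j,k). (d-j-k, j, k)"
  have sub: "?phi ` ({..dg} \<times> {..dh}) \<subseteq> monoms d"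
    using assms(1) unfolding monoms_def by auto
  have "(\<Sum>m\<in>monoms d. F m) = (\<Sum>m\<in>?phi ` ({..dg} \<times> {..dh}). F m)"
  proof (rule sum.mono_neutral_right[OF finite_monoms sub], clarify)
    fix i j k assume m: "(i,j,k) \<in> monoms d" and nm: "(i,j,k) \<notin> ?phi ` ({..dg} \<times> {..dh})"
    from m have ijk: "i+j+k = d" by (simp add: monoms_def)
    have "dg < j \<or> dh < k"
    proof (rule ccontr)
      assume "\<not> (dg < j \<or> dh < k)"
      then have "(j,k) \<in> {..dg} \<times> {..dh}" by auto
      moreover have "(i,j,k) = ?phi (j,k)" using ijk by auto
      ultimately show False using nm by blast
    qed
    then show "F (i,j,k) = 0" using assms(2) ijk by blast
  qed
  also have "\<dots> = (\<Sum>jk\<in>{..dg} \<times> {..dh}. F (?phi jk))"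
    by (subst sum.reindex) (auto simp: inj_on_def case_prod_beta)
  also have "\<dots> = (\<Sum>j\<le>dg. \<Sum>k\<le>dh. F (d-j-k, j, k))"
    by (simp add: sum.cartesian_product case_prod_beta)
  finally show ?thesis .
qed

lemma poly_le:
  fixes p :: "'a::comm_ring_1 poly"
  assumes "\<And>i. n < i \<Longrightarrow> coeff p i = 0"
  shows "poly p x = (\<Sum>i\<le>n. coeff p i * x^i)"
proof -
  have "poly p x = (\<Sum>i\<le>degree p. coeff p i * x^i)" by (simp add: poly_altdef)
  also have "\<dots> = (\<Sum>i\<le>max n (degree p). coeff p i * x^i)"
    by (rule sum.mono_neutral_left) (auto simp: coeff_eq_0)
  also have "\<dots> = (\<Sum>i\<le>n. coeff p i * x^i)"
    by (rule sum.mono_neutral_right) (auto simp: assms)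
  finally show ?thesis .
qed
lemma pderiv_sum:
  fixes g :: "'a::idom poly"
  shows "(\<Sum>j\<le>degree g. of_nat j * coeff g j * y^(j-1)) = poly (pderiv g) y"
proof (cases "degree g")
  case 0
  then obtain c where "g = [:c:]" using degree_eq_zeroE by blast
  then show ?thesis using 0 by (simp add: pderiv_pCons)
next
  case (Suc n)
  have "(\<Sum>j\<le>degree g. of_nat j * coeff g j * y^(j-1)) = (\<Sum>i\<le>n. of_nat (Suc i) * coeff g (Suc i) * y^i)"
    unfolding Suc sum.atMost_Suc_shift by simp
  also have "\<dots> = (\<Sum>i\<le>n. coeff (pderiv g) i * y^i)"
    by (simp add: coeff_pderiv)
  also have "\<dots> = poly (pderiv g) y"
  proof (rule poly_le[symmetric])
    fix i assume "n < i"
    then have "coeff g (Suc i) = 0" using Suc by (intro coeff_eq_0) simp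
    then show "coeff (pderiv g) i = 0" by (simp add: coeff_pderiv)
  qed
  finally show ?thesis .
qed

lemma P1_peval:
  fixes g h :: "'a::idom poly"
  assumes "degree g + degree h \<le> d"
  shows "peval d (P1 d g h) 1 y z = poly g y * poly h z"
proof -
  have "peval d (P1 d g h) 1 y z = (\<Sum>m\<in>monoms d. (case m of (i,j,k) \<Rightarrow> P1 d g h (i,j,k) * 1^i * y^j * z^k))"
    unfolding peval_def by simp
  also have "\<dots> = (\<Sum>j\<le>degree g. \<Sum>k\<le>degree h. coeff g j * coeff h k * y^j * z^k)"
    using assms by (subst sum_monoms_reindex[OF assms]) (auto simp: P1_def coeff_eq_0 intro!: sum.cong)
  also have "\<dots> = poly g y * poly h z"
    unfolding poly_altdef sum_product by (simp add: mult_ac)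
  finally show ?thesis .
qed

lemma P1_pdy:
  fixes g h :: "'a::idom poly"
  assumes "degree g + degree h \<le> d"
  shows "pdy d (P1 d g h) 1 y z = poly (pderiv g) y * poly h z"
proof -
  have "pdy d (P1 d g h) 1 y z = (\<Sum>m\<in>monoms d. (case m of (i,j,k) \<Rightarrow> P1 d g h (i,j,k) * of_nat j * 1^i * y^(j-1) * z^k))"
    unfolding pdy_def by simp
  also have "\<dots> = (\<Sum>j\<le>degree g. \<Sum>k\<le>degree h. (of_nat j * coeff g j * y^(j-1)) * (coeff h k * z^k))"
    using assms by (subst sum_monoms_reindex[OF assms]) (auto simp: P1_def coeff_eq_0 mult_ac intro!: sum.cong)
  also have "\<dots> = (\<Sum>j\<le>degree g. of_nat j * coeff g j * y^(j-1)) * (\<Sum>k\<le>degree h. coeff h k * z^k)"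
    by (simp add: sum_product)
  also have "\<dots> = poly (pderiv g) y * poly h z"
    by (subst pderiv_sum, subst poly_altdef[of h], rule refl)
  finally show ?thesis .
qed

lemma P1_pdz:
  fixes g h :: "'a::idom poly"
  assumes "degree g + degree h \<le> d"
  shows "pdz d (P1 d g h) 1 y z = poly g y * poly (pderiv h) z"
proof -
  have "pdz d (P1 d g h) 1 y z = (\<Sum>m\<in>monoms d. (case m of (i,j,k) \<Rightarrow> P1 d g h (i,j,k) * of_nat k * 1^i * y^j * z^(k-1)))"
    unfolding pdz_def by simp
  also have "\<dots> = (\<Sum>j\<le>degree g. \<Sum>k\<le>degree h. (coeff g j * y^j) * (of_nat k * coeff h k * z^(k-1)))"
    using assms by (subst sum_monoms_reindex[OF assms]) (auto simp: P1_def coeff_eq_0 mult_ac intro!: sum.cong)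
  also have "\<dots> = (\<Sum>j\<le>degree g. coeff g j * y^j) * (\<Sum>k\<le>degree h. of_nat k * coeff h k * z^(k-1))"
    by (simp add: sum_product)
  also have "\<dots> = poly g y * poly (pderiv h) z"
    by (subst pderiv_sum, subst poly_altdef[of g], rule refl)
  finally show ?thesis .
qed

lemma P1_sing0:
  fixes g h :: "'a::idom poly"
  assumes "degree g + degree h + 2 \<le> d"
  shows "sing_at d (P1 d g h) 0 y z"
proof -
  have cz: "coeff g j * coeff h k = 0" if "degree g + degree h < j + k" for j k
  proof -
    from that have "degree g < j \<or> degree h < k" by auto
    then show ?thesis by (auto simp: coeff_eq_0)
  qed
  have A: "P1 d g h (i,j,k) * (0::'a)^i = 0" if "(i,j,k) \<in> monoms d" for i j k
  proof (cases "i = 0")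
    case True
    then have "coeff g j * coeff h k = 0" using assms that by (intro cz) (auto simp: monoms_def)
    then show ?thesis by (simp add: P1_def)
  qed (simp add: power_0_left)
  have B: "P1 d g h (i,j,k) * (0::'a)^(i-1) = 0" if "(i,j,k) \<in> monoms d" for i j k
  proof (cases "i \<le> 1")
    case True
    then have "coeff g j * coeff h k = 0" using assms that by (intro cz) (auto simp: monoms_def)
    then show ?thesis by (simp add: P1_def)
  qed (simp add: power_0_left)
  have "peval d (P1 d g h) 0 y z = 0"
    unfolding peval_def
  proof (rule sum.neutral, clarify)
    fix i j k assume m: "(i,j,k) \<in> monoms d"
    have "P1 d g h (i,j,k) * 0^i * y^j * z^k = (P1 d g h (i,j,k) * 0^i) * (y^j * z^k)" by (simp only: mult_ac)
    then show "P1 d g h (i,j,k) * 0^i * y^j * z^k = 0" unfolding A[OF m] by simp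
  qed
  moreover have "pdx d (P1 d g h) 0 y z = 0"
    unfolding pdx_def
  proof (rule sum.neutral, clarify)
    fix i j k assume m: "(i,j,k) \<in> monoms d"
    have "P1 d g h (i,j,k) * of_nat i * 0^(i-1) * y^j * z^k = (P1 d g h (i,j,k) * 0^(i-1)) * (of_nat i * y^j * z^k)"
      by (simp only: mult_ac)
    then show "P1 d g h (i,j,k) * of_nat i * 0^(i-1) * y^j * z^k = 0" unfolding B[OF m] by simp
  qed
  moreover have "pdy d (P1 d g h) 0 y z = 0"
    unfolding pdy_def
  proof (rule sum.neutral, clarify)
    fix i j k assume m: "(i,j,k) \<in> monoms d"
    have "P1 d g h (i,j,k) * of_nat j * 0^i * y^(j-1) * z^k = (P1 d g h (i,j,k) * 0^i) * (of_nat j * y^(j-1) * z^k)"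
      by (simp only: mult_ac)
    then show "P1 d g h (i,j,k) * of_nat j * 0^i * y^(j-1) * z^k = 0" unfolding A[OF m] by simp
  qed
  moreover have "pdz d (P1 d g h) 0 y z = 0"
    unfolding pdz_def
  proof (rule sum.neutral, clarify)
    fix i j k assume m: "(i,j,k) \<in> monoms d"
    have "P1 d g h (i,j,k) * of_nat k * 0^i * y^j * z^(k-1) = (P1 d g h (i,j,k) * 0^i) * (of_nat k * y^j * z^(k-1))"
      by (simp only: mult_ac)
    then show "P1 d g h (i,j,k) * of_nat k * 0^i * y^j * z^(k-1) = 0" unfolding A[OF m] by simp
  qed
  ultimately show ?thesis unfolding sing_at_def by simp
qed

lemma sing_chart1:
  "sing_at d c 1 a b \<longleftrightarrow> peval d c 1 a b = 0 \<and> pdy d c 1 a b = 0 \<and> pdz d c 1 a b = 0"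
  using euler[of 1 d c a b] unfolding sing_at_def by auto


definition sw12 :: "(expo \<Rightarrow> 'a) \<Rightarrow> expo \<Rightarrow> 'a" where "sw12 c = (\<lambda>(i,j,k). c (j,i,k))"
definition sw13 :: "(expo \<Rightarrow> 'a) \<Rightarrow> expo \<Rightarrow> 'a" where "sw13 c = (\<lambda>(i,j,k). c (k,j,i))"

lemma sw12_homog: "c \<in> homog d \<Longrightarrow> sw12 c \<in> homog d"
  unfolding homog_def sw12_def monoms_def by (auto simp: add_ac)
lemma sw13_homog: "c \<in> homog d \<Longrightarrow> sw13 c \<in> homog d"
  unfolding homog_def sw13_def monoms_def by (auto simp: add_ac)

lemma sum_sw12: "(\<Sum>m\<in>monoms d. F m) = (\<Sum>m\<in>monoms d. F (case m of (i,j,k) \<Rightarrow> (j,i,k)))"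
  by (rule sum.reindex_bij_witness[where i="\<lambda>(i,j,k). (j,i,k)" and j="\<lambda>(i,j,k). (j,i,k)"])
     (auto simp: monoms_def)
lemma sum_sw13: "(\<Sum>m\<in>monoms d. F m) = (\<Sum>m\<in>monoms d. F (case m of (i,j,k) \<Rightarrow> (k,j,i)))"
  by (rule sum.reindex_bij_witness[where i="\<lambda>(i,j,k). (k,j,i)" and j="\<lambda>(i,j,k). (k,j,i)"])
     (auto simp: monoms_def)

lemma peval_sw12: "peval d (sw12 c) x y z = peval d c y x z"
  unfolding peval_def by (subst sum_sw12) (auto simp: sw12_def mult_ac intro!: sum.cong)
lemma pdx_sw12: "pdx d (sw12 c) x y z = pdy d c y x z"
  unfolding pdx_def pdy_def by (subst sum_sw12) (auto simp: sw12_def mult_ac intro!: sum.cong)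
lemma pdy_sw12: "pdy d (sw12 c) x y z = pdx d c y x z"
  unfolding pdx_def pdy_def by (subst sum_sw12) (auto simp: sw12_def mult_ac intro!: sum.cong)
lemma pdz_sw12: "pdz d (sw12 c) x y z = pdz d c y x z"
  unfolding pdz_def by (subst sum_sw12) (auto simp: sw12_def mult_ac intro!: sum.cong)

lemma peval_sw13: "peval d (sw13 c) x y z = peval d c z y x"
  unfolding peval_def by (subst sum_sw13) (auto simp: sw13_def mult_ac intro!: sum.cong)
lemma pdx_sw13: "pdx d (sw13 c) x y z = pdz d c z y x"
  unfolding pdx_def pdz_def by (subst sum_sw13) (auto simp: sw13_def mult_ac intro!: sum.cong)
lemma pdy_sw13: "pdy d (sw13 c) x y z = pdy d c z y x"
  unfolding pdy_def by (subst sum_sw13) (auto simp: sw13_def mult_ac intro!: sum.cong)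
lemma pdz_sw13: "pdz d (sw13 c) x y z = pdx d c z y x"
  unfolding pdx_def pdz_def by (subst sum_sw13) (auto simp: sw13_def mult_ac intro!: sum.cong)

lemma sing_sw12: "sing_at d (sw12 c) x y z \<longleftrightarrow> sing_at d c y x z"
  unfolding sing_at_def peval_sw12 pdx_sw12 pdy_sw12 pdz_sw12 by auto
lemma sing_sw13: "sing_at d (sw13 c) x y z \<longleftrightarrow> sing_at d c z y x"
  unfolding sing_at_def peval_sw13 pdx_sw13 pdy_sw13 pdz_sw13 by auto


lemma fermat:
  fixes x :: "'a::{finite,field}"
  assumes "x \<noteq> 0"
  shows "x ^ (card (UNIV::'a set) - 1) = 1"
proof -
  let ?S = "UNIV - {0::'a}"
  have cS: "card ?S = card (UNIV::'a set) - 1" by (simp add: card_Diff_singleton)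
  have img: "(\<lambda>y. x * y) ` ?S = ?S"
  proof
    show "(\<lambda>y. x * y) ` ?S \<subseteq> ?S" using assms by auto
    show "?S \<subseteq> (\<lambda>y. x * y) ` ?S"
    proof
      fix y assume "y \<in> ?S"
      then have "y = x * (y / x)" "y / x \<in> ?S" using assms by auto
      then show "y \<in> (\<lambda>y. x * y) ` ?S" by blast
    qed
  qed
  have inj: "inj_on (\<lambda>y. x * y) ?S" using assms by (auto simp: inj_on_def)
  have "prod id ?S = prod id ((\<lambda>y. x * y) ` ?S)" using img by simp
  also have "\<dots> = prod (\<lambda>y. x * y) ?S" using inj by (simp add: prod.reindex)
  also have "\<dots> = x ^ card ?S * prod id ?S" by (simp add: prod.distrib)
  finally have "x ^ card ?S * prod id ?S = 1 * prod id ?S" by simp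
  moreover have "prod id ?S \<noteq> 0" by (simp add: prod_zero_iff)
  ultimately have "x ^ card ?S = 1" by (rule mult_right_cancel[THEN iffD1, rotated])
  then show ?thesis using cS by simp
qed

lemma card_ge2: "2 \<le> card (UNIV::'a::{finite,field} set)"
proof -
  have "{0::'a, 1} \<subseteq> UNIV" by simp
  then have "card {0::'a,1} \<le> card (UNIV::'a set)" by (rule card_mono[OF finite_UNIV])
  then show ?thesis by simp
qed


definition G0 :: "'a::{finite,field} \<Rightarrow> 'a poly" where
  "G0 a = (1 - [:-a, 1:] ^ (2 * (card (UNIV::'a set) - 1)))^2"
definition G1 :: "'a::{finite,field} \<Rightarrow> 'a poly" where
  "G1 a = [:-a, 1:] * G0 a"

definition van :: "'a::{finite,field} poly \<Rightarrow> 'a \<Rightarrow> bool" where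
  "van g a \<longleftrightarrow> (\<forall>t. t \<noteq> a \<longrightarrow> poly g t = 0 \<and> poly (pderiv g) t = 0)"

lemma dlin: fixes a :: "'a::idom" shows "pderiv [:-a, 1:] = 1"
  by (simp add: pderiv_pCons)

lemma pderiv_lin_pow: fixes a :: "'a::idom" shows "poly (pderiv ([:-a, 1:] ^ n)) t = of_nat n * (t - a)^(n - 1)"
  by (simp add: pderiv_power dlin)

lemma G0_props:
  fixes a :: "'a::{finite,field}"
  shows "poly (G0 a) a = 1" "poly (pderiv (G0 a)) a = 0" "van (G0 a) a"
proof -
  let ?n = "2 * (card (UNIV::'a set) - 1)"
  have n2: "2 \<le> ?n" using card_ge2[where 'a='a] by simp
  let ?p = "1 - [:-a, 1:] ^ ?n"
  have G: "G0 a = ?p * ?p" unfolding G0_def by (simp add: power2_eq_square)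
  have pp: "poly ?p t = 1 - (t - a)^?n" for t by simp
  have dp: "poly (pderiv ?p) t = - (of_nat ?n * (t - a)^(?n - 1))" for t
    by (simp add: pderiv_diff pderiv_lin_pow)
  have dG: "poly (pderiv (G0 a)) t = poly ?p t * poly (pderiv ?p) t + poly ?p t * poly (pderiv ?p) t" for t
    unfolding G pderiv_mult poly_add poly_mult ..
  have pa: "poly ?p a = 1" using n2 by (simp add: pp)
  have dpa: "poly (pderiv ?p) a = 0" unfolding dp using n2 by (simp add: power_0_left)
  show "poly (G0 a) a = 1" unfolding G poly_mult pa by simp
  show "poly (pderiv (G0 a)) a = 0" unfolding dG dpa by simp
  have "poly ?p t = 0" if "t \<noteq> a" for t
  proof -
    have "(t - a)^?n = ((t - a)^(card (UNIV::'a set) - 1))^2" by (simp add: power_mult[symmetric] mult.commute)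
    also have "\<dots> = 1" using fermat[of "t - a"] that by simp
    finally show ?thesis by (simp add: pp)
  qed
  then show "van (G0 a) a" unfolding van_def using dG by (auto simp: G)
qed

lemma G1_props:
  fixes a :: "'a::{finite,field}"
  shows "poly (G1 a) a = 0" "poly (pderiv (G1 a)) a = 1" "van (G1 a) a"
proof -
  have d: "poly (pderiv (G1 a)) t = (t - a) * poly (pderiv (G0 a)) t + poly (G0 a) t" for t
    unfolding G1_def pderiv_mult dlin by (simp add: algebra_simps)
  show "poly (G1 a) a = 0" by (simp add: G1_def)
  show "poly (pderiv (G1 a)) a = 1" unfolding d using G0_props(1) by simp
  show "van (G1 a) a" using G0_props(3) unfolding van_def d by (auto simp: G1_def)
qed

lemma deg_G0: "degree (G0 (a::'a::{finite,field})) \<le> 4 * card (UNIV::'a set)"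
proof -
  let ?n = "2 * (card (UNIV::'a set) - 1)"
  have "degree ([:-a, 1:] ^ ?n) \<le> ?n"
    using degree_power_le[of "[:-a,1:]" ?n] by simp
  then have "degree (1 - [:-a, 1:] ^ ?n :: 'a poly) \<le> ?n"
    by (intro degree_diff_le) auto
  then have "degree ((1 - [:-a, 1:] ^ ?n)^2 :: 'a poly) \<le> ?n * 2"
    using degree_power_le[of "1 - [:-a, 1:] ^ ?n" 2] by (meson le_trans mult_le_mono1)
  then show ?thesis unfolding G0_def by simp
qed

lemma deg_G1: "degree (G1 (a::'a::{finite,field})) \<le> 4 * card (UNIV::'a set) + 1"
proof -
  have "degree (G1 a) \<le> degree [:-a,1:] + degree (G0 a)" unfolding G1_def by (rule degree_mult_le)
  then show ?thesis using deg_G0[of a] by simp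
qed


definition Pts :: "('a::{finite,field} \<times> 'a \<times> 'a) set" where
  "Pts = range (\<lambda>(a,b). (1,a,b)) \<union> range (\<lambda>a. (0,1,a)) \<union> {(0,0,1)}"

definition jc :: "nat \<Rightarrow> (expo \<Rightarrow> 'a::comm_ring_1) \<Rightarrow> 'a \<times> 'a \<times> 'a \<Rightarrow> nat \<Rightarrow> 'a" where
  "jc d c P r = (case P of (x,y,z) \<Rightarrow>
     (if r = 0 then peval d c x y z
      else if r = 1 then (if x \<noteq> 0 then pdy d c x y z else pdx d c x y z)
      else (if x \<noteq> 0 \<or> y \<noteq> 0 then pdz d c x y z else pdy d c x y z)))"

definition jet :: "nat \<Rightarrow> (expo \<Rightarrow> 'a::comm_ring_1) \<Rightarrow> 'a \<times> 'a \<times> 'a \<Rightarrow> 'a \<times> 'a \<times> 'a" where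
  "jet d c P = (jc d c P 0, jc d c P 1, jc d c P 2)"

lemma jc_lin: "jc d (\<lambda>m. \<Sum>i\<in>I. u i * f i m) P r = (\<Sum>i\<in>I. u i * jc d (f i) P r)"
  unfolding jc_def peval_lf pdx_lf pdy_lf pdz_lf lf_sum by (auto split: prod.split)

lemma jc_add: "jc d (\<lambda>m. a m + b m) P r = jc d a P r + jc d b P r"
  unfolding jc_def peval_lf pdx_lf pdy_lf pdz_lf lf_add by (auto split: prod.split)
lemma jc_diff: "jc d (\<lambda>m. a m - b m) P r = jc d a P r - jc d b P r"
  unfolding jc_def peval_lf pdx_lf pdy_lf pdz_lf lf_diff by (auto split: prod.split)

lemma sing_jc: "sing_at d c x y z \<Longrightarrow> jc d c (x,y,z) r = 0"
  unfolding jc_def sing_at_def by auto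

lemma jet_sing:
  assumes "(x,y,z) \<in> (Pts :: ('a::{finite,field} \<times> 'a \<times> 'a) set)"
  shows "sing_at d c x y z \<longleftrightarrow> jet d c (x,y,z) = (0,0,0)"
proof -
  have e: "x * pdx d c x y z + y * pdy d c x y z + z * pdz d c x y z = of_nat d * peval d c x y z"
    by (rule euler)
  from assms consider (A) a b where "(x,y,z) = (1,a,b)" | (B) a where "(x,y,z) = (0,1,a)" | (C) "(x,y,z) = (0,0,1)"
    unfolding Pts_def by auto
  then show ?thesis
  proof cases
    case A then show ?thesis using e unfolding sing_at_def jet_def jc_def by (auto simp: algebra_simps)
  next
    case B then show ?thesis using e unfolding sing_at_def jet_def jc_def by (auto simp: algebra_simps)
  next
    case C then show ?thesis using e unfolding sing_at_def jet_def jc_def by (auto simp: algebra_simps)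
  qed
qed

definition GG :: "bool \<Rightarrow> 'a::{finite,field} \<Rightarrow> 'a poly" where
  "GG e a = (if e then G1 a else G0 a)"

lemma GG_props:
  "van (GG e a) a" "poly (GG e a) a = (if e then 0 else 1)"
  "poly (pderiv (GG e a)) a = (if e then 1 else 0)"
  "degree (GG e (a::'a::{finite,field})) \<le> 4 * card (UNIV::'a set) + 1"
  unfolding GG_def using G0_props G1_props deg_G0[of a] deg_G1[of a] by auto

definition bump :: "nat \<Rightarrow> 'a::{finite,field} \<times> 'a \<times> 'a \<Rightarrow> nat \<Rightarrow> expo \<Rightarrow> 'a" where
  "bump d P k = (case P of (x,y,z) \<Rightarrow>
     (if x \<noteq> 0 then P1 d (GG (k=1) y) (GG (k=2) z)
      else if y \<noteq> 0 then sw12 (P1 d (GG (k=1) 0) (GG (k=2) z))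
      else sw13 (P1 d (GG (k=2) 0) (GG (k=1) 0))))"

lemma P1_sing_off:
  fixes g h :: "'a::{finite,field} poly"
  assumes deg: "degree g + degree h + 2 \<le> d" and vg: "van g a" and vh: "van h b"
    and off: "x = 0 \<or> y \<noteq> a * x \<or> z \<noteq> b * x"
  shows "sing_at d (P1 d g h) x y z"
proof (cases "x = 0")
  case True then show ?thesis using P1_sing0[OF deg] by simp
next
  case False
  have deg': "degree g + degree h \<le> d" using deg by simp
  have off': "y / x \<noteq> a \<or> z / x \<noteq> b" using off False by (auto simp: field_simps)
  have "sing_at d (P1 d g h) 1 (y/x) (z/x)"
    unfolding sing_chart1 P1_peval[OF deg'] P1_pdy[OF deg'] P1_pdz[OF deg']
    using off' vg vh unfolding van_def by auto
  then have "sing_at d (P1 d g h) (x*1) (x*(y/x)) (x*(z/x))"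
    using sing_scale[OF False] by blast
  then show ?thesis using False by simp
qed

lemma bump_homog: "bump d P k \<in> homog d"
  unfolding bump_def by (auto split: prod.split intro: P1_homog sw12_homog sw13_homog)

lemma bump_off:
  fixes P Q :: "'a::{finite,field} \<times> 'a \<times> 'a"
  assumes "P \<in> Pts" "Q \<in> Pts" "Q \<noteq> P" and d: "8 * card (UNIV::'a set) + 4 \<le> d"
  shows "sing_at d (bump d P k) (fst Q) (fst (snd Q)) (snd (snd Q))"
proof -
  have dg: "degree (GG e1 a1) + degree (GG e2 a2) + 2 \<le> d" for e1 e2 and a1 a2 :: 'a
    using GG_props(4)[of e1 a1] GG_props(4)[of e2 a2] d by simp
  obtain x y z where Q: "Q = (x,y,z)" by (cases Q) auto
  from assms(1) consider (A) a b where "P = (1,a,b)" | (B) a where "P = (0,1,a)" | (C) "P = (0,0,1)"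
    unfolding Pts_def by auto
  then show ?thesis
  proof cases
    case A
    have "x = 0 \<or> y \<noteq> a * x \<or> z \<noteq> b * x"
      using assms(2,3) unfolding A Q Pts_def by auto
    then show ?thesis unfolding A Q bump_def
      by (simp add: P1_sing_off[OF dg GG_props(1) GG_props(1)])
  next
    case B
    have "y = 0 \<or> x \<noteq> 0 * y \<or> z \<noteq> a * y"
      using assms(2,3) unfolding B Q Pts_def by auto
    then show ?thesis unfolding B Q bump_def
      by (simp add: sing_sw12 P1_sing_off[OF dg GG_props(1) GG_props(1)])
  next
    case C
    have "z = 0 \<or> y \<noteq> 0 * z \<or> x \<noteq> 0 * z"
      using assms(2,3) unfolding C Q Pts_def by auto
    then show ?thesis unfolding C Q bump_def
      by (simp add: sing_sw13 P1_sing_off[OF dg GG_props(1) GG_props(1)])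
  qed
qed

lemma bump_at:
  fixes P :: "'a::{finite,field} \<times> 'a \<times> 'a"
  assumes "P \<in> Pts" and d: "8 * card (UNIV::'a set) + 4 \<le> d" and k: "k < 3" and r: "r < 3"
  shows "jc d (bump d P k) P r = (if k = r then 1 else 0)"
proof -
  have dg: "degree (GG e1 a1) + degree (GG e2 a2) \<le> d" for e1 e2 and a1 a2 :: 'a
    using GG_props(4)[of e1 a1] GG_props(4)[of e2 a2] d by simp
  from assms(1) consider (A) a b where "P = (1,a,b)" | (B) a where "P = (0,1,a)" | (C) "P = (0,0,1)"
    unfolding Pts_def by auto
  then show ?thesis
  proof cases
    case A
    have "k = 0 \<or> k = 1 \<or> k = 2" "r = 0 \<or> r = 1 \<or> r = 2" using k r by auto
    then show ?thesis unfolding A bump_def jc_def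
      by (auto simp: P1_peval[OF dg] P1_pdy[OF dg] P1_pdz[OF dg] GG_props(2,3))
  next
    case B
    have "k = 0 \<or> k = 1 \<or> k = 2" "r = 0 \<or> r = 1 \<or> r = 2" using k r by auto
    then show ?thesis unfolding B bump_def jc_def
      by (auto simp: peval_sw12 pdx_sw12 pdz_sw12 P1_peval[OF dg] P1_pdy[OF dg] P1_pdz[OF dg] GG_props(2,3))
  next
    case C
    have "k = 0 \<or> k = 1 \<or> k = 2" "r = 0 \<or> r = 1 \<or> r = 2" using k r by auto
    then show ?thesis unfolding C bump_def jc_def
      by (auto simp: peval_sw13 pdx_sw13 pdy_sw13 P1_peval[OF dg] P1_pdy[OF dg] P1_pdz[OF dg] GG_props(2,3))
  qed
qed


definition cmp :: "nat \<Rightarrow> 'a \<times> 'a \<times> 'a \<Rightarrow> 'a" where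
  "cmp r w = (if r = 0 then fst w else if r = 1 then fst (snd w) else snd (snd w))"

lemma triple_eq_cmp: "(w = w') \<longleftrightarrow> (\<forall>r<3. cmp r w = cmp r w')"
proof
  assume "\<forall>r<3. cmp r w = cmp r w'"
  then have "cmp 0 w = cmp 0 w'" "cmp 1 w = cmp 1 w'" "cmp 2 w = cmp 2 w'" by auto
  then show "w = w'" unfolding cmp_def by (simp add: prod_eq_iff)
qed simp

lemma jet_cmp: "jet d c P = w \<longleftrightarrow> (\<forall>r<3. jc d c P r = cmp r w)"
proof -
  have "cmp r (jet d c P) = jc d c P r" if "r < 3" for r
  proof -
    have "r = 0 \<or> r = 1 \<or> r = 2" using that by arith
    then show ?thesis unfolding jet_def cmp_def by auto
  qed
  then show ?thesis unfolding triple_eq_cmp[of "jet d c P" w] by auto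
qed

definition pre :: "nat \<Rightarrow> ('a::{finite,field} \<times> 'a \<times> 'a \<Rightarrow> 'a \<times> 'a \<times> 'a) \<Rightarrow> expo \<Rightarrow> 'a" where
  "pre d w = (\<lambda>m. \<Sum>pk\<in>Pts \<times> {..<3}. cmp (snd pk) (w (fst pk)) * bump d (fst pk) (snd pk) m)"

lemma pre_homog: "pre d w \<in> homog d"
proof -
  have "bump d P k m = 0" if "m \<notin> monoms d" for P :: "'a \<times> 'a \<times> 'a" and k m
    using bump_homog[of d P k] that unfolding homog_def by (cases m) auto
  then show ?thesis unfolding homog_def pre_def by auto
qed

lemma pre_jc:
  fixes Q :: "'a::{finite,field} \<times> 'a \<times> 'a"
  assumes Q: "Q \<in> Pts" and d: "8 * card (UNIV::'a set) + 4 \<le> d" and r: "r < 3"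
  shows "jc d (pre d w) Q r = cmp r (w Q)"
proof -
  have "jc d (pre d w) Q r = (\<Sum>pk\<in>Pts \<times> {..<3}. cmp (snd pk) (w (fst pk)) * jc d (bump d (fst pk) (snd pk)) Q r)"
    unfolding pre_def by (rule jc_lin)
  also have "\<dots> = (\<Sum>pk\<in>{Q} \<times> {..<3}. cmp (snd pk) (w (fst pk)) * jc d (bump d (fst pk) (snd pk)) Q r)"
  proof (rule sum.mono_neutral_right)
    show "finite (Pts \<times> {..<3::nat})" by simp
    show "{Q} \<times> {..<3} \<subseteq> Pts \<times> {..<3::nat}" using Q by auto
    show "\<forall>pk\<in>Pts \<times> {..<3} - {Q} \<times> {..<3}. cmp (snd pk) (w (fst pk)) * jc d (bump d (fst pk) (snd pk)) Q r = 0"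
    proof
      fix pk assume pk: "pk \<in> Pts \<times> {..<3::nat} - {Q} \<times> {..<3}"
      then have "fst pk \<in> Pts" "fst pk \<noteq> Q" by auto
      then have "sing_at d (bump d (fst pk) (snd pk)) (fst Q) (fst (snd Q)) (snd (snd Q))"
        using bump_off[OF _ Q _ d] by metis
      then have "jc d (bump d (fst pk) (snd pk)) (fst Q, fst (snd Q), snd (snd Q)) r = 0"
        by (rule sing_jc)
      then show "cmp (snd pk) (w (fst pk)) * jc d (bump d (fst pk) (snd pk)) Q r = 0" by simp
    qed
  qed
  also have "\<dots> = (\<Sum>k<3. cmp k (w Q) * jc d (bump d Q k) Q r)"
  proof -
    have "{Q} \<times> {..<3::nat} = (\<lambda>k. (Q,k)) ` {..<3}" by auto
    then show ?thesis by (simp add: sum.reindex inj_on_def)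
  qed
  also have "\<dots> = (\<Sum>k<3. cmp k (w Q) * (if k = r then 1 else 0))"
    by (rule sum.cong) (simp_all add: bump_at[OF Q d _ r])
  also have "\<dots> = cmp r (w Q)"
    using r by (simp add: if_distrib sum.delta cong: if_cong)
  finally show ?thesis .
qed

lemma pre_jet:
  fixes Q :: "'a::{finite,field} \<times> 'a \<times> 'a"
  assumes Q: "Q \<in> Pts" and d: "8 * card (UNIV::'a set) + 4 \<le> d"
  shows "jet d (pre d w) Q = w Q"
  unfolding jet_cmp using pre_jc[OF Q d] by simp


type_synonym 'a pt = "'a \<times> 'a \<times> 'a"

fun dot :: "'a::comm_ring_1 pt \<Rightarrow> 'a pt \<Rightarrow> 'a" where
  "dot (a,b,e) (x,y,z) = a*x + b*y + e*z"
fun smul :: "'a::comm_ring_1 \<Rightarrow> 'a pt \<Rightarrow> 'a pt" where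
  "smul t (x,y,z) = (t*x, t*y, t*z)"
fun cross :: "'a::comm_ring_1 pt \<Rightarrow> 'a pt \<Rightarrow> 'a pt" where
  "cross (a,b,c) (x,y,z) = (b*z - c*y, c*x - a*z, a*y - b*x)"
fun nrm :: "'a::field pt \<Rightarrow> 'a pt" where
  "nrm (x,y,z) = (if x \<noteq> 0 then (1, y/x, z/x) else if y \<noteq> 0 then (0, 1, z/y) else (0,0,1))"
fun fac :: "'a::field pt \<Rightarrow> 'a" where
  "fac (x,y,z) = (if x \<noteq> 0 then x else if y \<noteq> 0 then y else z)"

lemma nrm_Pts: "nrm v \<in> Pts"
  by (cases v) (auto simp: Pts_def)

lemma fac_nz: "v \<noteq> (0,0,0) \<Longrightarrow> fac v \<noteq> 0"
  by (cases v) auto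

lemma v_eq: "v \<noteq> (0,0,0) \<Longrightarrow> v = smul (fac v) (nrm v)"
  by (cases v) auto

lemma Pts_nrm: "P \<in> Pts \<Longrightarrow> nrm P = P \<and> fac P = 1"
  by (auto simp: Pts_def)

lemma Pts_nz: "P \<in> Pts \<Longrightarrow> P \<noteq> (0,0,0)"
  by (auto simp: Pts_def)

lemma nrm_smul: "t \<noteq> 0 \<Longrightarrow> nrm (smul t v) = nrm v"
  by (cases v) (auto simp: field_simps)

lemma fac_smul: "t \<noteq> 0 \<Longrightarrow> fac (smul t v) = t * fac v"
  by (cases v) auto

lemma dot_smul: "dot L (smul t v) = t * dot L v"
  by (cases L; cases v) (simp add: algebra_simps)

lemma dot_smul1: "dot (smul t L) v = t * dot L v"
  by (cases L; cases v) (simp add: algebra_simps)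

lemma smul_nz: fixes t :: "'a::field" shows "t \<noteq> 0 \<Longrightarrow> v \<noteq> (0,0,0) \<Longrightarrow> smul t v \<noteq> (0,0,0)"
  by (cases v) auto

lemma cross_zero:
  fixes u v :: "'a::field pt"
  assumes "u \<noteq> (0,0,0)" "cross u v = (0,0,0)"
  shows "\<exists>t. v = smul t u"
proof -
  obtain a b c where u: "u = (a,b,c)" by (cases u) auto
  obtain x y z where v: "v = (x,y,z)" by (cases v) auto
  have e: "b*z = c*y" "c*x = a*z" "a*y = b*x" using assms(2) unfolding u v by auto
  consider "a \<noteq> 0" | "b \<noteq> 0" | "c \<noteq> 0" using assms(1) u by auto
  then show ?thesis
  proof cases
    case 1
    have "v = smul (x/a) u" unfolding u v using 1 e by (auto simp: field_simps)
    then show ?thesis by blast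
  next
    case 2
    have "v = smul (y/b) u" unfolding u v using 2 e by (auto simp: field_simps)
    then show ?thesis by blast
  next
    case 3
    have "v = smul (z/c) u" unfolding u v using 3 e by (auto simp: field_simps)
    then show ?thesis by blast
  qed
qed

lemma bac_cab:
  assumes "dot L P = 0" "dot L P' = 0"
  shows "cross L (cross P P') = (0,0,0)"
proof -
  obtain a b c where L: "L = (a,b,c)" by (cases L) auto
  obtain x y z where P: "P = (x,y,z)" by (cases P) auto
  obtain x' y' z' where P': "P' = (x',y',z')" by (cases P') auto
  have "cross L (cross P P') = (x * dot L P' - x' * dot L P, y * dot L P' - y' * dot L P, z * dot L P' - z' * dot L P)"
    unfolding L P P' by (simp add: algebra_simps)
  then show ?thesis using assms by simp
qed

lemma smul_same_nrm:
  fixes L L' :: "'a::{finite,field} pt"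
  assumes "L \<in> Pts" "L' \<in> Pts" "smul t L = smul t' L'" "t \<noteq> 0" "t' \<noteq> 0"
  shows "L = L'"
proof -
  have "nrm (smul t L) = nrm (smul t' L')" using assms(3) by simp
  then show ?thesis using nrm_smul[OF assms(4)] nrm_smul[OF assms(5)] Pts_nrm[OF assms(1)] Pts_nrm[OF assms(2)] by simp
qed

lemma cross_nz:
  fixes P P' :: "'a::{finite,field} pt"
  assumes "P \<in> Pts" "P' \<in> Pts" "P \<noteq> P'"
  shows "cross P P' \<noteq> (0,0,0)"
proof
  assume "cross P P' = (0,0,0)"
  then obtain t where t: "P' = smul t P" using cross_zero Pts_nz[OF assms(1)] by blast
  have "t \<noteq> 0" using t Pts_nz[OF assms(2)] by (cases P) auto
  then have "smul t P = smul 1 P'" using t by (cases P) auto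
  then have "P = P'" using smul_same_nrm[OF assms(1,2) _ \<open>t \<noteq> 0\<close>, of 1] by simp
  then show False using assms(3) by simp
qed

definition Zl :: "'a::{finite,field} pt \<Rightarrow> 'a pt set" where
  "Zl L = {P \<in> Pts. dot L P = 0}"

lemma Zl_inter:
  fixes L L' :: "'a::{finite,field} pt"
  assumes "L \<in> Pts" "L' \<in> Pts" "L \<noteq> L'"
  shows "card (Zl L \<inter> Zl L') \<le> 1"
proof -
  have "P = P'" if "P \<in> Zl L \<inter> Zl L'" "P' \<in> Zl L \<inter> Zl L'" for P P'
  proof (rule ccontr)
    assume ne: "P \<noteq> P'"
    have PP: "P \<in> Pts" "P' \<in> Pts" using that unfolding Zl_def by auto
    let ?w = "cross P P'"
    have wnz: "?w \<noteq> (0,0,0)" using cross_nz[OF PP ne] .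
    have "cross L ?w = (0,0,0)" using that unfolding Zl_def by (intro bac_cab) auto
    then obtain t where t: "?w = smul t L" using cross_zero Pts_nz[OF assms(1)] by blast
    have "cross L' ?w = (0,0,0)" using that unfolding Zl_def by (intro bac_cab) auto
    then obtain t' where t': "?w = smul t' L'" using cross_zero Pts_nz[OF assms(2)] by blast
    have "t \<noteq> 0" using t wnz by (cases L) auto
    moreover have "t' \<noteq> 0" using t' wnz by (cases L') auto
    ultimately have "L = L'" using smul_same_nrm[OF assms(1,2)] t t' by metis
    then show False using assms(3) by simp
  qed
  then show ?thesis using card_le_Suc0_iff_eq[of "Zl L \<inter> Zl L'"] by auto
qed


lemma card_UNIV2: "card (UNIV :: ('a::finite \<times> 'a) set) = card (UNIV :: 'a set) * card (UNIV :: 'a set)"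
  using card_cartesian_product[of "UNIV::'a set" "UNIV::'a set"] by (simp only: UNIV_Times_UNIV)

lemma card_Pts: "card (Pts :: 'a::{finite,field} pt set) = card (UNIV::'a set)^2 + card (UNIV::'a set) + 1"
proof -
  let ?A = "range (\<lambda>(a::'a,b::'a). (1::'a,a,b))" and ?B = "range (\<lambda>a::'a. (0::'a,1::'a,a))" and ?C = "{(0::'a,0::'a,1::'a)}"
  have "card ?A = card (UNIV::('a \<times> 'a) set)"
    by (rule card_image) (auto simp: inj_on_def)
  then have cA: "card ?A = card (UNIV::'a set)^2"
    using card_UNIV2[where 'a='a] by (simp add: power2_eq_square)
  have cB: "card ?B = card (UNIV::'a set)"
    by (subst card_image) (auto simp: inj_on_def)
  have "card (?A \<union> ?B) = card ?A + card ?B" by (rule card_Un_disjoint) auto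
  moreover have "card (?A \<union> ?B \<union> ?C) = card (?A \<union> ?B) + card ?C" by (rule card_Un_disjoint) auto
  ultimately show ?thesis unfolding Pts_def using cA cB by simp
qed

definition Hp :: "'a::{finite,field} pt \<Rightarrow> 'a pt set" where
  "Hp L = {v. dot L v = 0}"

lemma card_Hp:
  fixes L :: "'a::{finite,field} pt"
  assumes "L \<in> Pts"
  shows "card (Hp L) = card (UNIV::'a set)^2"
proof -
  from assms consider (A) a b where "L = (1,a,b)" | (B) a where "L = (0,1,a)" | (C) "L = (0,0,1)"
    unfolding Pts_def by auto
  then show ?thesis
  proof cases
    case A
    have "Hp L = (\<lambda>(y,z). (-(a*y+b*z), y, z)) ` UNIV"
    proof (intro set_eqI)
      fix v :: "'a pt"
      obtain x y z where v: "v = (x,y,z)" by (cases v) auto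
      have "v \<in> Hp L \<longleftrightarrow> x = -(a*y+b*z)" unfolding Hp_def A v
        by (simp only: mem_Collect_eq dot.simps mult_1 add.assoc eq_neg_iff_add_eq_0)
      also have "\<dots> \<longleftrightarrow> v \<in> (\<lambda>(y,z). (-(a*y+b*z), y, z)) ` UNIV" unfolding v by (auto simp: image_iff)
      finally show "v \<in> Hp L \<longleftrightarrow> v \<in> (\<lambda>(y,z). (-(a*y+b*z), y, z)) ` UNIV" .
    qed
    moreover have "inj (\<lambda>(y::'a,z::'a). (-(a*y+b*z), y, z))" by (auto simp: inj_on_def)
    ultimately show ?thesis by (simp add: card_image card_UNIV2 power2_eq_square)
  next
    case B
    have "Hp L = (\<lambda>(x,z). (x, -(a*z), z)) ` UNIV"
    proof (intro set_eqI)
      fix v :: "'a pt"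
      obtain x y z where v: "v = (x,y,z)" by (cases v) auto
      have "v \<in> Hp L \<longleftrightarrow> y = -(a*z)" unfolding Hp_def B v
        by (simp only: mem_Collect_eq dot.simps mult_1 mult_zero_left add.left_neutral eq_neg_iff_add_eq_0)
      also have "\<dots> \<longleftrightarrow> v \<in> (\<lambda>(x,z). (x, -(a*z), z)) ` UNIV" unfolding v by (auto simp: image_iff)
      finally show "v \<in> Hp L \<longleftrightarrow> v \<in> (\<lambda>(x,z). (x, -(a*z), z)) ` UNIV" .
    qed
    moreover have "inj (\<lambda>(x::'a,z::'a). (x, -(a*z), z))" by (auto simp: inj_on_def)
    ultimately show ?thesis by (simp add: card_image card_UNIV2 power2_eq_square)
  next
    case C
    have "Hp L = (\<lambda>(x,y). (x, y, 0)) ` UNIV"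
      unfolding Hp_def C by (auto simp: image_iff)
    moreover have "inj (\<lambda>(x::'a,y::'a). (x, y, 0::'a))" by (auto simp: inj_on_def)
    ultimately show ?thesis by (simp add: card_image card_UNIV2 power2_eq_square)
  qed
qed

lemma card_Zl:
  fixes L :: "'a::{finite,field} pt"
  assumes L: "L \<in> Pts"
  shows "card (Zl L) = card (UNIV::'a set) + 1"
proof -
  let ?Q = "card (UNIV::'a set)"
  let ?f = "\<lambda>(P,t). smul t P"
  have bij: "bij_betw ?f (Zl L \<times> (UNIV - {0::'a})) (Hp L - {(0,0,0)})"
  proof (rule bij_betwI')
    fix x y assume x: "x \<in> Zl L \<times> (UNIV - {0::'a})" and y: "y \<in> Zl L \<times> (UNIV - {0::'a})"
    obtain P t where xe: "x = (P,t)" by (cases x) auto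
    obtain P' t' where ye: "y = (P',t')" by (cases y) auto
    have PP: "P \<in> Pts" "P' \<in> Pts" "t \<noteq> 0" "t' \<noteq> 0" using x y unfolding xe ye Zl_def by auto
    show "(?f x = ?f y) = (x = y)"
    proof
      assume "?f x = ?f y"
      then have e: "smul t P = smul t' P'" unfolding xe ye by simp
      then have "P = P'" using smul_same_nrm[OF PP(1,2) e PP(3,4)] by simp
      moreover have "fac (smul t P) = fac (smul t' P')" using e by simp
      then have "t = t'" using fac_smul[OF PP(3)] fac_smul[OF PP(4)] Pts_nrm[OF PP(1)] Pts_nrm[OF PP(2)] by simp
      ultimately show "x = y" unfolding xe ye by simp
    qed simp
  next
    fix x assume x: "x \<in> Zl L \<times> (UNIV - {0::'a})"
    obtain P t where xe: "x = (P,t)" by (cases x) auto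
    have h: "P \<in> Pts" "dot L P = 0" "t \<noteq> 0" using x unfolding xe Zl_def by auto
    have "smul t P \<noteq> (0,0,0)" using smul_nz[OF h(3) Pts_nz[OF h(1)]] .
    then show "?f x \<in> Hp L - {(0,0,0)}"
      unfolding xe Hp_def using h by (auto simp: dot_smul)
  next
    fix v assume v: "v \<in> Hp L - {(0,0,0)}"
    then have nz: "v \<noteq> (0,0,0)" and dv: "dot L v = 0" unfolding Hp_def by auto
    have ve: "v = smul (fac v) (nrm v)" using v_eq[OF nz] .
    have "dot L v = fac v * dot L (nrm v)" by (subst ve) (simp add: dot_smul)
    then have "dot L (nrm v) = 0" using dv fac_nz[OF nz] by simp
    moreover have "nrm v \<in> Pts" by (rule nrm_Pts)
    ultimately have "(nrm v, fac v) \<in> Zl L \<times> (UNIV - {0::'a})" using fac_nz[OF nz] unfolding Zl_def by blast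
    moreover have "v = ?f (nrm v, fac v)" using ve by simp
    ultimately show "\<exists>x\<in>Zl L \<times> (UNIV - {0::'a}). v = ?f x" by blast
  qed
  have "card (Zl L \<times> (UNIV - {0::'a})) = card (Hp L - {(0,0,0)})" using bij_betw_same_card[OF bij] .
  moreover have "card (Zl L \<times> (UNIV - {0::'a})) = card (Zl L) * (?Q - 1)"
    by (simp add: card_cartesian_product card_Diff_singleton)
  moreover have "card (Hp L - {(0,0,0)}) = ?Q^2 - 1"
  proof -
    have "(0,0,0) \<in> Hp L" by (cases L) (simp add: Hp_def)
    then show ?thesis using card_Hp[OF L] by (simp add: card_Diff_singleton)
  qed
  ultimately have e: "card (Zl L) * (?Q - 1) = ?Q^2 - 1" by simp
  have "?Q^2 - 1 = (?Q + 1) * (?Q - 1)" by (simp add: power2_eq_square algebra_simps)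
  with e have h: "card (Zl L) * (?Q - 1) = (?Q + 1) * (?Q - 1)" by simp
  have nz: "?Q - 1 \<noteq> 0" using card_ge2[where 'a='a] by simp
  show ?thesis using h mult_right_cancel[OF nz] by blast
qed


lemma Theta_char:
  fixes c :: "expo \<Rightarrow> 'a::{finite,field}"
  shows "c \<in> Theta d \<longleftrightarrow> c \<in> homog d \<and> (\<exists>L\<in>Pts. \<forall>P\<in>Zl L. jet d c P = (0,0,0))"
proof
  assume "c \<in> Theta d"
  then obtain a b e where c: "c \<in> homog d" and nz: "(a,b,e) \<noteq> (0,0,0)"
    and S: "\<And>x y z. (x,y,z) \<noteq> (0,0,0) \<and> a*x + b*y + e*z = 0 \<Longrightarrow> sing_at d c x y z"
    unfolding Theta_def by blast
  let ?L = "nrm (a,b,e)"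
  have Le: "(a,b,e) = smul (fac (a,b,e)) ?L" using v_eq[OF nz] .
  have "jet d c P = (0,0,0)" if P: "P \<in> Zl ?L" for P
  proof -
    obtain x y z where Pe: "P = (x,y,z)" by (cases P) auto
    have PP: "P \<in> Pts" "dot ?L P = 0" using P unfolding Zl_def by auto
    have "dot (a,b,e) P = 0" by (subst Le) (simp only: dot_smul1 PP(2) mult_zero_right)
    then have "a*x + b*y + e*z = 0" unfolding Pe by simp
    moreover have "(x,y,z) \<noteq> (0,0,0)" using Pts_nz[OF PP(1)] Pe by simp
    ultimately have "sing_at d c x y z" using S by blast
    then show ?thesis using jet_sing PP(1) unfolding Pe by blast
  qed
  then show "c \<in> homog d \<and> (\<exists>L\<in>Pts. \<forall>P\<in>Zl L. jet d c P = (0,0,0))" using c nrm_Pts by blast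
next
  assume "c \<in> homog d \<and> (\<exists>L\<in>Pts. \<forall>P\<in>Zl L. jet d c P = (0,0,0))"
  then obtain L where c: "c \<in> homog d" and L: "L \<in> Pts" and J: "\<And>P. P \<in> Zl L \<Longrightarrow> jet d c P = (0,0,0)"
    by blast
  obtain a b e where Le: "L = (a,b,e)" by (cases L) auto
  have G: "sing_at d c (fst v) (fst (snd v)) (snd (snd v))" if nz: "v \<noteq> (0,0,0)" and dv: "dot L v = 0" for v
  proof -
    have ve: "v = smul (fac v) (nrm v)" using v_eq[OF nz] .
    have "dot L v = fac v * dot L (nrm v)" by (subst ve) (simp only: dot_smul)
    then have "dot L (nrm v) = 0" using dv fac_nz[OF nz] by simp
    moreover have np: "nrm v \<in> Pts" by (rule nrm_Pts)
    ultimately have "nrm v \<in> Zl L" unfolding Zl_def by blast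
    then have jz: "jet d c (nrm v) = (0,0,0)" by (rule J)
    obtain x' y' z' where ne: "nrm v = (x',y',z')" by (cases "nrm v") auto
    have s': "sing_at d c x' y' z'" using jet_sing[of x' y' z' d c] np jz unfolding ne by simp
    have "v = (fac v * x', fac v * y', fac v * z')" using ve unfolding ne by simp
    then have "fst v = fac v * x' \<and> fst (snd v) = fac v * y' \<and> snd (snd v) = fac v * z'"
      by (metis fst_conv snd_conv)
    then show ?thesis using sing_scale[OF fac_nz[OF nz], of d c x' y' z'] s' by (simp del: fac.simps)
  qed
  have "sing_at d c x y z" if v: "(x,y,z) \<noteq> (0,0,0) \<and> a*x + b*y + e*z = 0" for x y z
    using G[of "(x,y,z)"] v Le by simp
  moreover have "(a,b,e) \<noteq> (0,0,0)" using Pts_nz[OF L] Le by simp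
  ultimately show "c \<in> Theta d" unfolding Theta_def using c by blast
qed


definition Wsp :: "('a::{finite,field} pt \<Rightarrow> 'a pt) set" where
  "Wsp = PiE Pts (\<lambda>_. UNIV)"
definition Jd :: "nat \<Rightarrow> (expo \<Rightarrow> 'a::{finite,field}) \<Rightarrow> 'a pt \<Rightarrow> 'a pt" where
  "Jd d c = restrict (jet d c) Pts"
definition Bset :: "('a::{finite,field} pt \<Rightarrow> 'a pt) set" where
  "Bset = {w \<in> Wsp. \<exists>L\<in>Pts. \<forall>P\<in>Zl L. w P = (0,0,0)}"
definition Fib :: "nat \<Rightarrow> ('a::{finite,field} pt \<Rightarrow> 'a pt) \<Rightarrow> (expo \<Rightarrow> 'a) set" where
  "Fib d w = {c \<in> homog d. Jd d c = w}"
definition w0 :: "'a::{finite,field} pt \<Rightarrow> 'a pt" where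
  "w0 = restrict (\<lambda>_. (0,0,0)) Pts"

lemma Jd_W: "Jd d c \<in> Wsp"
  unfolding Jd_def Wsp_def by auto

lemma w0_W: "w0 \<in> Wsp"
  unfolding w0_def Wsp_def by auto

lemma Zl_sub: "Zl L \<subseteq> Pts"
  unfolding Zl_def by auto

lemma Theta_eq: "Theta d = {c \<in> homog d. Jd d c \<in> Bset}"
proof (intro set_eqI)
  fix c :: "expo \<Rightarrow> 'a"
  have "(\<forall>P\<in>Zl L. jet d c P = (0,0,0)) \<longleftrightarrow> (\<forall>P\<in>Zl L. Jd d c P = (0,0,0))" for L
    using Zl_sub[of L] unfolding Jd_def by auto
  then show "c \<in> Theta d \<longleftrightarrow> c \<in> {c \<in> homog d. Jd d c \<in> Bset}"
    unfolding Theta_char Bset_def using Jd_W by auto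
qed

lemma finite_homog: "finite (homog d :: (expo \<Rightarrow> 'a::{finite,zero}) set)"
proof -
  have inj: "inj_on (\<lambda>c. restrict c (monoms d)) (homog d :: (expo \<Rightarrow> 'a) set)"
  proof (rule inj_onI)
    fix c c' :: "expo \<Rightarrow> 'a"
    assume h: "c \<in> homog d" "c' \<in> homog d" "restrict c (monoms d) = restrict c' (monoms d)"
    show "c = c'"
    proof
      fix m show "c m = c' m"
      proof (cases "m \<in> monoms d")
        case True then show ?thesis using fun_cong[OF h(3), of m] by simp
      next
        case False then show ?thesis using h(1,2) unfolding homog_def by (cases m) auto
      qed
    qed
  qed
  have "(\<lambda>c. restrict c (monoms d)) ` (homog d :: (expo \<Rightarrow> 'a) set) \<subseteq> PiE (monoms d) (\<lambda>_. UNIV)"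
    by auto
  moreover have "finite (PiE (monoms d) (\<lambda>_. UNIV :: 'a set))"
    by (rule finite_PiE) (auto simp: finite_monoms)
  ultimately have "finite ((\<lambda>c. restrict c (monoms d)) ` (homog d :: (expo \<Rightarrow> 'a) set))"
    by (rule finite_subset)
  then show ?thesis using finite_imageD[OF _ inj] by blast
qed

lemma homog_add: fixes c k :: "expo \<Rightarrow> 'a::comm_ring_1" shows "c \<in> homog d \<Longrightarrow> k \<in> homog d \<Longrightarrow> (\<lambda>m. c m + k m) \<in> homog d"
  unfolding homog_def by auto
lemma homog_diff: fixes c k :: "expo \<Rightarrow> 'a::comm_ring_1" shows "c \<in> homog d \<Longrightarrow> k \<in> homog d \<Longrightarrow> (\<lambda>m. c m - k m) \<in> homog d"
  unfolding homog_def by auto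

lemma Jd_eq:
  assumes "w \<in> Wsp" "\<And>P r. P \<in> Pts \<Longrightarrow> r < 3 \<Longrightarrow> jc d c P r = cmp r (w P)"
  shows "Jd d c = w"
proof
  fix P
  show "Jd d c P = w P"
  proof (cases "P \<in> Pts")
    case True
    then have "jet d c P = w P" unfolding jet_cmp using assms(2) by auto
    then show ?thesis using True unfolding Jd_def by simp
  next
    case False
    then show ?thesis using assms(1) unfolding Jd_def Wsp_def by (cases P) (auto simp: PiE_def extensional_def)
  qed
qed

lemma Jd_jc: "Jd d c = w \<Longrightarrow> P \<in> Pts \<Longrightarrow> r < 3 \<Longrightarrow> jc d c P r = cmp r (w P)"
  unfolding Jd_def using jet_cmp[of d c P "w P"] by auto

lemma Fib_card:
  fixes w :: "'a::{finite,field} pt \<Rightarrow> 'a pt"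
  assumes w: "w \<in> Wsp" and d: "8 * card (UNIV::'a set) + 4 \<le> d"
  shows "card (Fib d w) = card (Fib d (w0 :: 'a pt \<Rightarrow> 'a pt))"
proof -
  let ?f = "\<lambda>k m. pre d w m + k m"
  let ?g = "\<lambda>c m. c m - pre d w m"
  have "bij_betw ?f (Fib d w0) (Fib d w)"
  proof (rule bij_betw_byWitness[where f'="?g"])
    show "\<forall>a\<in>Fib d w0. ?g (?f a) = a" by simp
    show "\<forall>a\<in>Fib d w. ?f (?g a) = a" by simp
    show "?f ` Fib d w0 \<subseteq> Fib d w"
    proof clarify
      fix k :: "expo \<Rightarrow> 'a" assume k: "k \<in> Fib d w0"
      have kh: "k \<in> homog d" and kJ: "Jd d k = w0" using k unfolding Fib_def by auto
      have "Jd d (?f k) = w"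
      proof (rule Jd_eq[OF w])
        fix P :: "'a pt" and r :: nat assume P: "P \<in> Pts" and r: "r < 3"
        have "jc d (?f k) P r = jc d (pre d w) P r + jc d k P r" by (rule jc_add)
        also have "\<dots> = cmp r (w P) + cmp r (w0 P)" using pre_jc[OF P d r] Jd_jc[OF kJ P r] by simp
        also have "\<dots> = cmp r (w P)" using P by (simp add: w0_def cmp_def)
        finally show "jc d (?f k) P r = cmp r (w P)" .
      qed
      then show "?f k \<in> Fib d w" unfolding Fib_def using homog_add[OF pre_homog kh] by simp
    qed
    show "?g ` Fib d w \<subseteq> Fib d w0"
    proof clarify
      fix c :: "expo \<Rightarrow> 'a" assume c: "c \<in> Fib d w"
      have ch: "c \<in> homog d" and cJ: "Jd d c = w" using c unfolding Fib_def by auto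
      have "Jd d (?g c) = w0"
      proof (rule Jd_eq[OF w0_W])
        fix P :: "'a pt" and r :: nat assume P: "P \<in> Pts" and r: "r < 3"
        have "jc d (?g c) P r = jc d c P r - jc d (pre d w) P r" by (rule jc_diff)
        also have "\<dots> = 0" using pre_jc[OF P d r] Jd_jc[OF cJ P r] by simp
        also have "\<dots> = cmp r (w0 P)" using P by (simp add: w0_def cmp_def)
        finally show "jc d (?g c) P r = cmp r (w0 P)" .
      qed
      then show "?g c \<in> Fib d w0" unfolding Fib_def using homog_diff[OF ch pre_homog] by simp
    qed
  qed
  from bij_betw_same_card[OF this] show ?thesis by simp
qed

lemma finite_Fib: "finite (Fib d w)"
  unfolding Fib_def using finite_homog by (rule finite_subset[rotated]) auto

lemma card_union_Fib:
  fixes S :: "('a::{finite,field} pt \<Rightarrow> 'a pt) set"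
  assumes S: "S \<subseteq> Wsp" and d: "8 * card (UNIV::'a set) + 4 \<le> d"
  shows "card {c \<in> homog d. Jd d c \<in> S} = card S * card (Fib d (w0 :: 'a pt \<Rightarrow> 'a pt))"
proof -
  have "{c \<in> homog d. Jd d c \<in> S} = (\<Union>w\<in>S. Fib d w)" unfolding Fib_def by auto
  moreover have "finite S" by simp
  then have "card (\<Union>w\<in>S. Fib d w) = (\<Sum>w\<in>S. card (Fib d w))"
    by (rule card_UN_disjoint) (simp_all add: finite_Fib, auto simp: Fib_def)
  moreover have "(\<Sum>w\<in>S. card (Fib d w)) = (\<Sum>w\<in>S. card (Fib d (w0 :: 'a pt \<Rightarrow> 'a pt)))"
    using Fib_card[OF _ d] S by (intro sum.cong) auto
  ultimately show ?thesis by simp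
qed

lemma ratio:
  fixes dummy :: "'a::{finite,field}"
  assumes d: "8 * card (UNIV::'a set) + 4 \<le> d"
  shows "real (card (Theta d :: (expo \<Rightarrow> 'a) set)) / real (card (homog d :: (expo \<Rightarrow> 'a) set))
       = real (card (Bset :: ('a pt \<Rightarrow> 'a pt) set)) / real (card (Wsp :: ('a pt \<Rightarrow> 'a pt) set))"
proof -
  have "Bset \<subseteq> (Wsp :: ('a pt \<Rightarrow> 'a pt) set)" unfolding Bset_def by auto
  then have cT: "card (Theta d :: (expo \<Rightarrow> 'a) set) = card (Bset :: ('a pt \<Rightarrow> 'a pt) set) * card (Fib d (w0::'a pt \<Rightarrow> 'a pt))"
    unfolding Theta_eq using card_union_Fib[OF _ d] by blast
  have eq: "homog d = {c \<in> homog d. Jd d c \<in> (Wsp :: ('a pt \<Rightarrow> 'a pt) set)}" using Jd_W by auto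
  have "card (homog d :: (expo \<Rightarrow> 'a) set) = card {c \<in> homog d. Jd d c \<in> (Wsp :: ('a pt \<Rightarrow> 'a pt) set)}"
    using eq by (rule arg_cong)
  also have "\<dots> = card (Wsp :: ('a pt \<Rightarrow> 'a pt) set) * card (Fib d (w0::'a pt \<Rightarrow> 'a pt))"
    by (rule card_union_Fib[OF subset_refl d])
  finally have cH: "card (homog d :: (expo \<Rightarrow> 'a) set) = card (Wsp :: ('a pt \<Rightarrow> 'a pt) set) * card (Fib d (w0::'a pt \<Rightarrow> 'a pt))" .
  have "(\<lambda>m. 0) \<in> Fib d (w0::'a pt \<Rightarrow> 'a pt)"
  proof -
    have "Jd d (\<lambda>m. 0::'a) = w0"
    proof (rule Jd_eq[OF w0_W])
      fix P :: "'a pt" and r :: nat assume "P \<in> Pts" "r < 3"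
      have "jc d (\<lambda>m. 0::'a) P r = 0"
        unfolding jc_def peval_lf pdx_lf pdy_lf pdz_lf lf_zero by (auto split: prod.split)
      then show "jc d (\<lambda>m. 0::'a) P r = cmp r (w0 P)" using \<open>P \<in> Pts\<close> by (simp add: w0_def cmp_def)
    qed
    then show ?thesis unfolding Fib_def homog_def by auto
  qed
  then have "card (Fib d (w0::'a pt \<Rightarrow> 'a pt)) > 0" using finite_Fib card_gt_0_iff by blast
  then show ?thesis unfolding cT cH by simp
qed


fun pairs :: "('b \<Rightarrow> 'c set) \<Rightarrow> 'b list \<Rightarrow> real" where
  "pairs A [] = 0"
| "pairs A (x # xs) = (\<Sum>y\<leftarrow>xs. real (card (A x \<inter> A y))) + pairs A xs"

lemma bonf:
  assumes "\<forall>x\<in>set xs. finite (A x)" "distinct xs"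
  shows "(\<Sum>x\<leftarrow>xs. real (card (A x))) - pairs A xs \<le> real (card (\<Union>x\<in>set xs. A x))"
  using assms
proof (induction xs)
  case Nil then show ?case by simp
next
  case (Cons x xs)
  let ?U = "\<Union>y\<in>set xs. A y"
  have fU: "finite ?U" using Cons.prems by auto
  have fA: "finite (A x)" using Cons.prems by auto
  have IH: "(\<Sum>x\<leftarrow>xs. real (card (A x))) - pairs A xs \<le> real (card ?U)"
    using Cons by auto
  have ui: "card (A x \<union> ?U) + card (A x \<inter> ?U) = card (A x) + card ?U"
    using card_Un_Int[OF fA fU] by simp
  have "A x \<inter> ?U = (\<Union>y\<in>set xs. A x \<inter> A y)" by auto
  then have "card (A x \<inter> ?U) \<le> (\<Sum>y\<in>set xs. card (A x \<inter> A y))"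
    using card_UN_le[of "set xs" "\<lambda>y. A x \<inter> A y"] by simp
  then have "real (card (A x \<inter> ?U)) \<le> (\<Sum>y\<in>set xs. real (card (A x \<inter> A y)))"
    by (simp only: of_nat_sum[symmetric] of_nat_le_iff)
  also have "\<dots> = (\<Sum>y\<leftarrow>xs. real (card (A x \<inter> A y)))"
    using Cons.prems(2) by (simp add: sum_list_distinct_conv_sum_set)
  finally have I: "real (card (A x \<inter> ?U)) \<le> (\<Sum>y\<leftarrow>xs. real (card (A x \<inter> A y)))" .
  have "real (card (A x \<union> ?U)) = real (card (A x)) + real (card ?U) - real (card (A x \<inter> ?U))"
    using ui by (metis add_diff_cancel_right' of_nat_add)
  then show ?case using IH I by simp
qed

lemma pairs_le:
  assumes "distinct xs" "\<And>x y. x \<in> set xs \<Longrightarrow> y \<in> set xs \<Longrightarrow> x \<noteq> y \<Longrightarrow> real (card (A x \<inter> A y)) \<le> K"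
  shows "pairs A xs \<le> K * (real (length xs) * (real (length xs) - 1) / 2)"
  using assms
proof (induction xs)
  case Nil then show ?case by simp
next
  case (Cons x xs)
  have IH: "pairs A xs \<le> K * (real (length xs) * (real (length xs) - 1) / 2)"
    using Cons by auto
  have "(\<Sum>y\<leftarrow>xs. real (card (A x \<inter> A y))) = (\<Sum>y\<in>set xs. real (card (A x \<inter> A y)))"
    using Cons.prems(1) by (simp add: sum_list_distinct_conv_sum_set)
  also have "\<dots> \<le> real (card (set xs)) * K"
    by (rule sum_bounded_above) (use Cons.prems in auto)
  also have "\<dots> = real (length xs) * K" using Cons.prems(1) by (simp add: distinct_card)
  finally have "(\<Sum>y\<leftarrow>xs. real (card (A x \<inter> A y))) \<le> real (length xs) * K" .
  then have "pairs A (x # xs) \<le> real (length xs) * K + K * (real (length xs) * (real (length xs) - 1) / 2)"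
    using IH by simp
  also have "\<dots> = K * (real (length (x # xs)) * (real (length (x # xs)) - 1) / 2)"
    by (simp add: field_simps)
  finally show ?case .
qed

lemma final_ineq:
  fixes N A Mq Mp b x cB :: real
  assumes pos: "A > 0" "Mp > 0" "b > 0" "x > 0" and Mq: "Mq = b * x^2" and N: "N > 0" "(N - 1) / 2 \<le> x^2"
    and lo: "N * A * Mq - N * (N - 1) / 2 * A \<le> cB" and up: "cB \<le> N * A * Mq"
  shows "N * inverse Mp * (1 - inverse b) \<le> cB / (A * Mq * Mp) \<and> cB / (A * Mq * Mp) \<le> N * inverse Mp"
proof
  have AMM: "A * Mq * Mp > 0" using pos Mq by simp
  show "cB / (A * Mq * Mp) \<le> N * inverse Mp"
  proof -
    have "cB / (A * Mq * Mp) \<le> (N * A * Mq) / (A * Mq * Mp)" by (rule divide_right_mono[OF up]) (use AMM in simp)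
    also have "\<dots> = N * inverse Mp" using pos Mq by (simp add: field_simps)
    finally show ?thesis .
  qed
  have "(N * A * Mq - N * (N - 1) / 2 * A) / (A * Mq * Mp) \<le> cB / (A * Mq * Mp)"
    by (rule divide_right_mono[OF lo]) (use AMM in simp)
  moreover have "(N * A * Mq - N * (N - 1) / 2 * A) / (A * Mq * Mp) = N * inverse Mp - (N * ((N - 1) / 2)) / (Mq * Mp)"
    using pos Mq by (simp add: field_simps)
  moreover have "(N * ((N - 1) / 2)) / (Mq * Mp) \<le> (N * x^2) / (Mq * Mp)"
    using N pos Mq by (intro divide_right_mono mult_left_mono) auto
  moreover have "(N * x^2) / (Mq * Mp) = N * inverse Mp * inverse b"
    using pos Mq by (simp add: field_simps)
  ultimately show "N * inverse Mp * (1 - inverse b) \<le> cB / (A * Mq * Mp)"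
    by (simp add: algebra_simps)
qed


lemma card_pt: "card (UNIV :: 'a::finite pt set) = card (UNIV::'a set) ^ 3"
proof -
  have "card (UNIV \<times> (UNIV \<times> UNIV) :: 'a pt set) = card (UNIV::'a set) * card (UNIV \<times> UNIV :: ('a \<times> 'a) set)"
    by (rule card_cartesian_product)
  also have "\<dots> = card (UNIV::'a set) * (card (UNIV::'a set) * card (UNIV::'a set))"
    using card_cartesian_product[of "UNIV::'a set" "UNIV::'a set"] by simp
  finally show ?thesis by (simp add: power3_eq_cube)
qed

definition BL :: "'a::{finite,field} pt \<Rightarrow> ('a pt \<Rightarrow> 'a pt) set" where
  "BL L = {w \<in> Wsp. \<forall>P\<in>Zl L. w P = (0,0,0)}"

lemma card_vanish:
  assumes "S \<subseteq> (Pts :: 'a::{finite,field} pt set)"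
  shows "card {w \<in> (Wsp :: ('a pt \<Rightarrow> 'a pt) set). \<forall>P\<in>S. w P = (0,0,0)}
     = (card (UNIV::'a set) ^ 3) ^ (card (Pts :: 'a pt set) - card S)"
proof -
  let ?U = "card (UNIV::'a set) ^ 3"
  have eq: "{w \<in> (Wsp :: ('a pt \<Rightarrow> 'a pt) set). \<forall>P\<in>S. w P = (0,0,0)} = PiE Pts (\<lambda>P. if P \<in> S then {(0,0,0)} else UNIV)"
  proof (intro set_eqI iffI)
    fix w :: "'a pt \<Rightarrow> 'a pt"
    assume "w \<in> {w \<in> Wsp. \<forall>P\<in>S. w P = (0,0,0)}"
    then have h: "w \<in> PiE Pts (\<lambda>_. UNIV)" "\<forall>P\<in>S. w P = (0,0,0)" unfolding Wsp_def by auto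
    then show "w \<in> PiE Pts (\<lambda>P. if P \<in> S then {(0,0,0)} else UNIV)"
      unfolding PiE_iff by auto
  next
    fix w :: "'a pt \<Rightarrow> 'a pt"
    assume h: "w \<in> PiE Pts (\<lambda>P. if P \<in> S then {(0,0,0)} else UNIV)"
    then have "w \<in> PiE Pts (\<lambda>_. UNIV)" unfolding PiE_iff by auto
    moreover have "\<forall>P\<in>S. w P = (0,0,0)"
    proof
      fix P assume "P \<in> S"
      then have "P \<in> Pts" using assms by auto
      then have "w P \<in> (if P \<in> S then {(0,0,0)} else UNIV)" using h unfolding PiE_iff by blast
      then show "w P = (0,0,0)" using \<open>P \<in> S\<close> by simp
    qed
    ultimately show "w \<in> {w \<in> Wsp. \<forall>P\<in>S. w P = (0,0,0)}" unfolding Wsp_def by auto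
  qed
  have "card (PiE Pts (\<lambda>P. if P \<in> S then {(0::'a,0::'a,0::'a)} else UNIV)) = (\<Prod>P\<in>Pts. card (if P \<in> S then {(0::'a,0::'a,0::'a)} else UNIV))"
    by (rule card_PiE) simp
  also have "\<dots> = (\<Prod>P\<in>Pts. if P \<in> S then 1 else ?U)"
    by (rule prod.cong) (auto simp: card_pt)
  also have "\<dots> = (\<Prod>P\<in>Pts \<inter> {P. P \<in> S}. 1) * (\<Prod>P\<in>Pts \<inter> - {P. P \<in> S}. ?U)"
    by (rule prod.If_cases) simp
  also have "\<dots> = ?U ^ card (Pts - S)"
    by (simp add: Diff_eq)
  also have "card (Pts - S) = card (Pts :: 'a pt set) - card S"
    using assms by (simp add: card_Diff_subset finite_subset)
  finally show ?thesis using eq by simp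
qed

lemma card_Wsp: "card (Wsp :: ('a::{finite,field} pt \<Rightarrow> 'a pt) set) = (card (UNIV::'a set) ^ 3) ^ card (Pts :: 'a pt set)"
proof -
  have "{w \<in> (Wsp :: ('a pt \<Rightarrow> 'a pt) set). \<forall>P\<in>{}. w P = (0,0,0)} = Wsp" by simp
  then show ?thesis using card_vanish[of "{}"] by simp
qed

lemma card_BL:
  fixes L :: "'a::{finite,field} pt"
  assumes "L \<in> Pts"
  shows "card (BL L) = (card (UNIV::'a set) ^ 3) ^ (card (UNIV::'a set) ^ 2)"
  unfolding BL_def using card_vanish[OF Zl_sub[of L]] card_Zl[OF assms] card_Pts[where 'a='a] by simp

lemma card_BL2:
  fixes L L' :: "'a::{finite,field} pt"
  assumes "L \<in> Pts" "L' \<in> Pts" "L \<noteq> L'"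
  shows "card (BL L \<inter> BL L') \<le> (card (UNIV::'a set) ^ 3) ^ (card (UNIV::'a set) ^ 2 - card (UNIV::'a set))"
proof -
  let ?Q = "card (UNIV::'a set)"
  have eq: "BL L \<inter> BL L' = {w \<in> Wsp. \<forall>P\<in>Zl L \<union> Zl L'. w P = (0,0,0)}" unfolding BL_def by auto
  have sub: "Zl L \<union> Zl L' \<subseteq> Pts" using Zl_sub[of L] Zl_sub[of L'] by auto
  have "card (Zl L \<union> Zl L') + card (Zl L \<inter> Zl L') = card (Zl L) + card (Zl L')"
    using card_Un_Int[of "Zl L" "Zl L'"] by simp
  then have cu: "2 * ?Q + 1 \<le> card (Zl L \<union> Zl L')"
    using Zl_inter[OF assms] card_Zl[OF assms(1)] card_Zl[OF assms(2)] by simp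
  have "card (BL L \<inter> BL L') = (?Q ^ 3) ^ (card (Pts :: 'a pt set) - card (Zl L \<union> Zl L'))"
    unfolding eq by (rule card_vanish[OF sub])
  also have "\<dots> \<le> (?Q ^ 3) ^ (?Q^2 - ?Q)"
  proof (rule power_increasing)
    show "card (Pts :: 'a pt set) - card (Zl L \<union> Zl L') \<le> ?Q^2 - ?Q"
      using cu card_Pts[where 'a='a] by simp
    show "1 \<le> ?Q ^ 3" using card_ge2[where 'a='a] by simp
  qed
  finally show ?thesis .
qed

lemma Bset_UN: "(Bset :: ('a::{finite,field} pt \<Rightarrow> 'a pt) set) = (\<Union>L\<in>Pts. BL L)"
  unfolding Bset_def BL_def by auto


lemma Bset_upper:
  "real (card (Bset :: ('a::{finite,field} pt \<Rightarrow> 'a pt) set))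
    \<le> real (card (Pts :: 'a pt set)) * real ((card (UNIV::'a set) ^ 3) ^ (card (UNIV::'a set) ^ 2))"
proof -
  have "card (Bset :: ('a pt \<Rightarrow> 'a pt) set) \<le> (\<Sum>L\<in>(Pts :: 'a pt set). card (BL L))"
    unfolding Bset_UN by (rule card_UN_le) simp
  also have "\<dots> = (\<Sum>L\<in>(Pts :: 'a pt set). (card (UNIV::'a set) ^ 3) ^ (card (UNIV::'a set) ^ 2))"
    by (rule sum.cong) (simp_all add: card_BL)
  also have "\<dots> = card (Pts :: 'a pt set) * (card (UNIV::'a set) ^ 3) ^ (card (UNIV::'a set) ^ 2)" by simp
  finally show ?thesis by (metis of_nat_le_iff of_nat_mult)
qed

lemma Bset_lower:
  "real (card (Pts :: 'a::{finite,field} pt set)) * real ((card (UNIV::'a set) ^ 3) ^ (card (UNIV::'a set) ^ 2))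
   - real (card (Pts :: 'a pt set)) * (real (card (Pts :: 'a pt set)) - 1) / 2 * real ((card (UNIV::'a set) ^ 3) ^ (card (UNIV::'a set) ^ 2 - card (UNIV::'a set)))
   \<le> real (card (Bset :: ('a pt \<Rightarrow> 'a pt) set))"
proof -
  let ?N = "card (Pts :: 'a pt set)"
  let ?E1 = "(card (UNIV::'a set) ^ 3) ^ (card (UNIV::'a set) ^ 2)"
  let ?E2 = "(card (UNIV::'a set) ^ 3) ^ (card (UNIV::'a set) ^ 2 - card (UNIV::'a set))"
  obtain xs where xs: "set xs = (Pts :: 'a pt set)" "distinct xs"
    using finite_distinct_list[of "Pts :: 'a pt set"] by auto
  have len: "length xs = ?N" using xs distinct_card by metis
  have h1: "(\<Sum>x\<leftarrow>xs. real (card (BL x))) - pairs BL xs \<le> real (card (\<Union>x\<in>set xs. BL x))"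
    by (rule bonf) (simp_all add: xs)
  have h2: "(\<Sum>x\<leftarrow>xs. real (card (BL x))) = real ?N * real ?E1"
  proof -
    have "(\<Sum>x\<leftarrow>xs. real (card (BL x))) = (\<Sum>x\<in>set xs. real (card (BL x)))"
      using xs(2) by (simp add: sum_list_distinct_conv_sum_set)
    also have "\<dots> = (\<Sum>x\<in>set xs. real ?E1)"
      by (rule sum.cong) (simp_all add: card_BL xs(1))
    finally show ?thesis using len xs(2) by (simp add: distinct_card)
  qed
  have h3: "pairs BL xs \<le> real ?E2 * (real (length xs) * (real (length xs) - 1) / 2)"
  proof (rule pairs_le[OF xs(2)])
    fix x y assume "x \<in> set xs" "y \<in> set xs" "x \<noteq> y"
    then have "x \<in> Pts" "y \<in> Pts" "x \<noteq> y" using xs(1) by auto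
    then have "card (BL x \<inter> BL y) \<le> ?E2" by (rule card_BL2)
    then show "real (card (BL x \<inter> BL y)) \<le> real ?E2" by (simp only: of_nat_le_iff)
  qed
  have h4: "(\<Union>x\<in>set xs. BL x) = Bset" unfolding Bset_UN xs(1) ..
  have h3': "pairs BL xs \<le> real ?N * (real ?N - 1) / 2 * real ?E2" using h3 unfolding len by (metis mult.commute)
  have aux: "S - P \<le> c \<Longrightarrow> S = a \<Longrightarrow> P \<le> b \<Longrightarrow> a - b \<le> c" for S P c a b :: real by linarith
  show ?thesis using aux[OF h1 h2 h3'] unfolding h4 .
qed


theorem mainTheorem8:
  fixes q :: real and dummy :: "'a::{finite,field}"
  defines "q \<equiv> real (card (UNIV :: 'a set))"
  shows "\<exists>L. (\<lambda>d. real (card (Theta d :: (expo \<Rightarrow> 'a) set)) / real (card (homog d :: (expo \<Rightarrow> 'a) set)))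
              \<longlonglongrightarrow> L
          \<and> (q^2 + q + 1) * q powr (-3 * (q + 1)) * (1 - q powr (-3 * q + 2)) \<le> L
          \<and> L \<le> (q^2 + q + 1) * q powr (-3 * (q + 1))"
proof -
  let ?Q = "card (UNIV :: 'a set)"
  let ?U = "?Q ^ 3"
  let ?L = "real (card (Bset :: ('a pt \<Rightarrow> 'a pt) set)) / real (card (Wsp :: ('a pt \<Rightarrow> 'a pt) set))"
  have Q2: "2 \<le> ?Q" using card_ge2[where 'a='a] .
  have qpos: "q > 0" using Q2 unfolding q_def by simp
  have lim: "(\<lambda>d. real (card (Theta d :: (expo \<Rightarrow> 'a) set)) / real (card (homog d :: (expo \<Rightarrow> 'a) set))) \<longlonglongrightarrow> ?L"
  proof (rule tendsto_eventually)
    show "\<forall>\<^sub>F d in sequentially. real (card (Theta d :: (expo \<Rightarrow> 'a) set)) / real (card (homog d :: (expo \<Rightarrow> 'a) set)) = ?L"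
      unfolding eventually_sequentially using ratio[where 'a='a] by blast
  qed
  let ?N = "real (card (Pts :: 'a pt set))"
  let ?A = "real (?U ^ (?Q^2 - ?Q))"
  let ?Mq = "real (?U ^ ?Q)"
  let ?Mp = "real (?U ^ (?Q + 1))"
  let ?b = "q ^ (3 * ?Q - 2)"
  have N: "?N = q^2 + q + 1" unfolding q_def using card_Pts[where 'a='a] by simp
  have E: "?Q^2 - ?Q + ?Q + (?Q + 1) = card (Pts :: 'a pt set)"
    using card_Pts[where 'a='a] Q2 by (simp add: power2_eq_square)
  have W: "real (card (Wsp :: ('a pt \<Rightarrow> 'a pt) set)) = ?A * ?Mq * ?Mp"
    unfolding card_Wsp E[symmetric] by (simp add: power_add)
  have E1: "real (?U ^ (?Q^2)) = ?A * ?Mq"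
  proof -
    have "?Q^2 = ?Q^2 - ?Q + ?Q" using Q2 by (simp add: power2_eq_square)
    then have "?U ^ (?Q^2) = ?U ^ (?Q^2 - ?Q) * ?U ^ ?Q" by (metis power_add)
    then show ?thesis by simp
  qed
  have Mq: "?Mq = ?b * q^2"
  proof -
    have "?Mq = q ^ (3 * ?Q)" unfolding q_def by (simp add: power_mult)
    also have "3 * ?Q = (3 * ?Q - 2) + 2" using Q2 by simp
    then have "q ^ (3 * ?Q) = ?b * q^2" by (metis power_add)
    finally show ?thesis .
  qed
  have ineq: "?N * inverse ?Mp * (1 - inverse ?b) \<le> real (card (Bset :: ('a pt \<Rightarrow> 'a pt) set)) / (?A * ?Mq * ?Mp)
      \<and> real (card (Bset :: ('a pt \<Rightarrow> 'a pt) set)) / (?A * ?Mq * ?Mp) \<le> ?N * inverse ?Mp"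
  proof (rule final_ineq)
    show "?A > 0" "?Mp > 0" using Q2 by simp_all
    show "?b > 0" "q > 0" using qpos by simp_all
    show "?Mq = ?b * q^2" by (rule Mq)
    show "?N > 0" unfolding N using qpos by (simp add: add_pos_nonneg)
    show "(?N - 1) / 2 \<le> q^2" unfolding N using qpos Q2 unfolding q_def by (simp add: power2_eq_square)
    show "?N * ?A * ?Mq - ?N * (?N - 1) / 2 * ?A \<le> real (card (Bset :: ('a pt \<Rightarrow> 'a pt) set))"
      using Bset_lower[where 'a='a] E1 by (simp add: mult.assoc)
    show "real (card (Bset :: ('a pt \<Rightarrow> 'a pt) set)) \<le> ?N * ?A * ?Mq"
      using Bset_upper[where 'a='a] E1 by (simp add: mult.assoc)
  qed
  have p1: "q powr (-3 * (q + 1)) = inverse ?Mp"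
  proof -
    have e: "-3 * (q + 1) = - real (3 * (?Q + 1))" unfolding q_def by simp
    have "q powr (-3 * (q + 1)) = q powr (- real (3 * (?Q + 1)))" using e by (rule arg_cong)
    also have "\<dots> = inverse (q powr real (3 * (?Q + 1)))" by (rule powr_minus)
    also have "\<dots> = inverse (q ^ (3 * (?Q + 1)))" using qpos by (simp only: powr_realpow)
    finally have "q powr (-3 * (q + 1)) = inverse (q ^ (3 * (?Q + 1)))" .
    also have "q ^ (3 * (?Q + 1)) = ?Mp" unfolding q_def by (simp only: of_nat_power power_mult)
    finally show ?thesis .
  qed
  have p2: "q powr (-3 * q + 2) = inverse ?b"
  proof -
    have "-3 * q + 2 = - real (3 * ?Q - 2)" unfolding q_def using Q2 by (simp add: of_nat_diff)
    then show ?thesis using qpos by (simp add: powr_minus powr_realpow)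
  qed
  show ?thesis
    using lim ineq unfolding W p1 p2 N[symmetric] by blast
qed


end
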